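(* Let $n\in\mathbb N$, let $\alpha$ be an $n\times n$ matrix, $g\in\mathbb C^n$, $\mu$ purely imaginary ($\overline\mu=-\mu$), with $\det(\mu\alpha\pm I_n)\neq0$ and $\det(\mu\alpha\pm\mathrm{i} I_n)\neq0$. Define $\Pi(x)=\begin{bmatrix}\Lambda_1(x)&\Lambda_2(x)\end{bmatrix}$ on $(-\ell,\ell)$ by $$\Lambda_1(x)=-\mathrm{i}\alpha\big(\mathrm{e}^{\mathrm{i}x\alpha}(\mu\alpha+I_n)g-\mathrm{e}^{-\mathrm{i}x\alpha}(\mu\alpha-I_n)g\big),\quad \Lambda_2(x)=\mathrm{e}^{\mathrm{i}x\alpha}(\mu\alpha+I_n)g+\mathrm{e}^{-\mathrm{i}x\alpha}(\mu\alpha-I_n)g\quad (x\ge0),$$ $$\Lambda_1(x)=-\alpha\big(\mathrm{e}^{x\alpha}(\mu\alpha+\mathrm{i}I_n)g-\mathrm{e}^{-x\alpha}(\mu\alpha-\mathrm{i}I_n)g\big),\quad \Lambda_2(x)=\mathrm{e}^{x\alpha}(\mu\alpha+\mathrm{i}I_n)g+\mathrm{e}^{-x\alpha}(\mu\alpha-\mathrm{i}I_n)g\quad (x\le0),$$ and $S(x)=\int_0^x\Lambda_2(t)\Lambda_2(t)^*dt$ for $x>0$, $S(x)=\int_x^0\Lambda_2(t)\Lambda_2(t)^*dt$ for $x<0$. Assume $\det S(x)\neq0$ for $x\neq0$. Let $J=\begin{bmatrix}0&1\\-1&0\end{bmatrix}$, $X=J\Pi^*S^{-1}\Pi$ with entries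 $X_{ij}$, and $$w_A(x,\lambda)=I_2-J\Pi(x)^*S(x)^{-1}(\alpha^2-\lambda I_n)^{-1}\Pi(x).$$ Let $y(x,\lambda)=T_+(\lambda)\mathrm{e}^{xD_+(\lambda)}T_+(\lambda)^{-1}h$ for $x>0$ and $y(x,\lambda)=T_-(\lambda)\mathrm{e}^{xD_-(\lambda)}T_-(\lambda)^{-1}h$ for $x<0$, with $h\in\mathbb C^2$, $T_+=\begin{bmatrix}1&1\\ \mathrm{i}\sqrt\lambda & -\mathrm{i}\sqrt\lambda\end{bmatrix}$, $D_+=\mathrm{diag}(\mathrm{i}\sqrt\lambda,-\mathrm{i}\sqrt\lambda)$, $T_-=\begin{bmatrix}1&1\\ \sqrt\lambda & -\sqrt\lambda\end{bmatrix}$, $D_-=\mathrm{diag}(\sqrt\lambda,-\sqrt\lambda)$ (any fixed branch of $\sqrt\lambda$). Set $\widetilde y(x,\lambda)=w_A(x,\lambda)y(x,\lambda)$. Then the first entry $\widetilde y_1$ of $\widetilde y$ satisfies, for $x\neq0$, the indefinite Sturm-Liouville equation $$-\widetilde y_1''(x,\lambda)+\breve q(x)\widetilde y_1(x,\lambda)=\lambda\,\mathrm{sgn}(x)\,\widetilde y_1(x,\lambda)\quad(-\ell<x<\ell),$$ where $\breve q(x)=2\,\mathrm{sgn}(x)\big(X_{11}(x)-X_{22}(x)\big)+2X_{12}(x)^2$.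
   Context: Here $y$ solves the initial system $y'=\begin{bmatrix}0&1\\ -\lambda\,\mathrm{sgn}(x)&0\end{bmatrix}y$ (Shin-Zettl with $\omega=\mathrm{sgn}(x)$, $p\equiv1$, $q=r\equiv0$), and $\Pi$, $S$ arise from GBDT with $A=\alpha^2$, $S(0)=0$, $\Pi(0)=\begin{bmatrix}-2\mathrm{i}\alpha g & 2\mu\alpha g\end{bmatrix}$. *)

theory Defs
  imports "HOL-Analysis.Analysis"
begin

primrec mat_pow :: "complex^'n^'n \<Rightarrow> nat \<Rightarrow> complex^'n^'n" where
  "mat_pow A 0 = mat 1"
| "mat_pow A (Suc k) = A ** mat_pow A k"

definition mexp :: "complex^'n^'n \<Rightarrow> complex^'n^'n" where
  "mexp A = (\<Sum>k. (1 / fact k) *\<^sub>R mat_pow A k)"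

definition cadj :: "complex^'m^'n \<Rightarrow> complex^'n^'m" where
  "cadj A = (\<chi> i j. cnj (A $ j $ i))"

definition cscale :: "complex \<Rightarrow> complex^'n^'n \<Rightarrow> complex^'n^'n" where
  "cscale c A = mat c ** A"

text \<open>Lambda_1, Lambda_2 (piecewise, x \<ge> 0 and x < 0; the two formulas agree at 0).\<close>
definition Lam1 :: "complex^'n^'n \<Rightarrow> complex \<Rightarrow> complex^'n \<Rightarrow> real \<Rightarrow> complex^'n" where
  "Lam1 \<alpha> \<mu> g x =
    (if x \<ge> 0 then
       - (cscale \<i> \<alpha> *v
          (mexp (cscale (\<i> * of_real x) \<alpha>) *v ((cscale \<mu> \<alpha> + mat 1) *v g)
           - mexp (cscale (- \<i> * of_real x) \<alpha>) *v ((cscale \<mu> \<alpha> - mat 1) *v g)))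
     else
       - (\<alpha> *v
          (mexp (cscale (of_real x) \<alpha>) *v ((cscale \<mu> \<alpha> + mat \<i>) *v g)
           - mexp (cscale (- of_real x) \<alpha>) *v ((cscale \<mu> \<alpha> - mat \<i>) *v g))))"

definition Lam2 :: "complex^'n^'n \<Rightarrow> complex \<Rightarrow> complex^'n \<Rightarrow> real \<Rightarrow> complex^'n" where
  "Lam2 \<alpha> \<mu> g x =
    (if x \<ge> 0 then
       mexp (cscale (\<i> * of_real x) \<alpha>) *v ((cscale \<mu> \<alpha> + mat 1) *v g)
       + mexp (cscale (- \<i> * of_real x) \<alpha>) *v ((cscale \<mu> \<alpha> - mat 1) *v g)
     else
       mexp (cscale (of_real x) \<alpha>) *v ((cscale \<mu> \<alpha> + mat \<i>) *v g)
       + mexp (cscale (- of_real x) \<alpha>) *v ((cscale \<mu> \<alpha> - mat \<i>) *v g))"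

definition PiM :: "complex^'n^'n \<Rightarrow> complex \<Rightarrow> complex^'n \<Rightarrow> real \<Rightarrow> complex^2^'n" where
  "PiM \<alpha> \<mu> g x = (\<chi> i j. if j = 1 then Lam1 \<alpha> \<mu> g x $ i else Lam2 \<alpha> \<mu> g x $ i)"

definition outer :: "complex^'n \<Rightarrow> complex^'n^'n" where
  "outer v = (\<chi> i j. v $ i * cnj (v $ j))"

definition SM :: "complex^'n^'n \<Rightarrow> complex \<Rightarrow> complex^'n \<Rightarrow> real \<Rightarrow> complex^'n^'n" where
  "SM \<alpha> \<mu> g x =
    (if x > 0 then integral {0..x} (\<lambda>t. outer (Lam2 \<alpha> \<mu> g t))
     else if x < 0 then integral {x..0} (\<lambda>t. outer (Lam2 \<alpha> \<mu> g t))
     else 0)"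

definition Jmat :: "complex^2^2" where
  "Jmat = (\<chi> i j. if i = 1 \<and> j = 2 then 1 else if i = 2 \<and> j = 1 then -1 else 0)"

definition XM :: "complex^'n^'n \<Rightarrow> complex \<Rightarrow> complex^'n \<Rightarrow> real \<Rightarrow> complex^2^2" where
  "XM \<alpha> \<mu> g x = Jmat ** cadj (PiM \<alpha> \<mu> g x) ** matrix_inv (SM \<alpha> \<mu> g x) ** PiM \<alpha> \<mu> g x"

definition wA :: "complex^'n^'n \<Rightarrow> complex \<Rightarrow> complex^'n \<Rightarrow> real \<Rightarrow> complex \<Rightarrow> complex^2^2" where
  "wA \<alpha> \<mu> g x lam = mat 1 - Jmat ** cadj (PiM \<alpha> \<mu> g x) ** matrix_inv (SM \<alpha> \<mu> g x)
        ** matrix_inv (\<alpha> ** \<alpha> - mat lam) ** PiM \<alpha> \<mu> g x"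

definition qbreve :: "complex^'n^'n \<Rightarrow> complex \<Rightarrow> complex^'n \<Rightarrow> real \<Rightarrow> complex" where
  "qbreve \<alpha> \<mu> g x = 2 * of_real (sgn x) * (XM \<alpha> \<mu> g x $ 1 $ 1 - XM \<alpha> \<mu> g x $ 2 $ 2)
                      + 2 * (XM \<alpha> \<mu> g x $ 1 $ 2)^2"

text \<open>Solution y of the initial system; s is a fixed square root of lambda.
  For x > 0 use T_+, D_+; for x < 0 use T_-, D_- (value at 0 irrelevant; we use the x<0 branch).\<close>
definition Tp :: "complex \<Rightarrow> complex^2^2" where
  "Tp s = (\<chi> i j. if i = 1 then 1 else if j = 1 then \<i> * s else - \<i> * s)"
definition Dp :: "complex \<Rightarrow> complex^2^2" where
  "Dp s = (\<chi> i j. if i = j then (if i = 1 then \<i> * s else - \<i> * s) else 0)"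
definition Tm :: "complex \<Rightarrow> complex^2^2" where
  "Tm s = (\<chi> i j. if i = 1 then 1 else if j = 1 then s else - s)"
definition Dm :: "complex \<Rightarrow> complex^2^2" where
  "Dm s = (\<chi> i j. if i = j then (if i = 1 then s else - s) else 0)"

definition yinit :: "complex \<Rightarrow> complex^2 \<Rightarrow> real \<Rightarrow> complex^2" where
  "yinit s h x =
    (if x > 0 then (Tp s ** mexp (cscale (of_real x) (Dp s)) ** matrix_inv (Tp s)) *v h
     else (Tm s ** mexp (cscale (of_real x) (Dm s)) ** matrix_inv (Tm s)) *v h)"

end

theory Submission
  imports Defs
begin


lemma cs: "(r::real) *\<^sub>R (z::complex) = of_real r * z" by (simp add: scaleR_conv_of_real)

lemma matrix_add_rdistrib': "((B::complex^'m^'n) + C) ** A = B ** A + C ** A"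
  by (simp add: matrix_matrix_mult_def vec_eq_iff sum.distrib algebra_simps)

lemma bb_mm: "bounded_bilinear (\<lambda>(A::complex^'m^'n) (B::complex^'k^'m). A ** B)"
proof -
  have "bilinear (\<lambda>(A::complex^'m^'n) (B::complex^'k^'m). A ** B)"
    unfolding bilinear_def
    by (auto intro!: linearI simp: matrix_add_ldistrib matrix_add_rdistrib' scalar_matrix_assoc matrix_scalar_ac)
  thus ?thesis using bilinear_conv_bounded_bilinear by blast
qed

lemma bb_mv: "bounded_bilinear (\<lambda>(A::complex^'m^'n) (v::complex^'m). A *v v)"
proof -
  have "bilinear (\<lambda>(A::complex^'m^'n) (v::complex^'m). A *v v)"
    unfolding bilinear_def
    by (auto intro!: linearI simp: matrix_vector_mult_def vec_eq_iff sum.distrib algebra_simps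
       vector_scaleR_component cs sum_distrib_left)
  thus ?thesis using bilinear_conv_bounded_bilinear by blast
qed

lemma bl_cadj: "bounded_linear (cadj :: complex^'m^'n \<Rightarrow> complex^'n^'m)"
proof -
  have "linear (cadj :: complex^'m^'n \<Rightarrow> complex^'n^'m)"
    by (auto intro!: linearI simp: cadj_def vec_eq_iff vector_scaleR_component cs)
  thus ?thesis using linear_conv_bounded_linear by blast
qed


lemma cadj_mult: "cadj ((A::complex^'m^'n) ** (B::complex^'k^'m)) = cadj B ** cadj A"
  by (simp add: cadj_def matrix_matrix_mult_def vec_eq_iff mult.commute)

lemma cadj_add: "cadj (A + B) = cadj A + cadj B"
  by (simp add: cadj_def vec_eq_iff)
lemma cadj_diff: "cadj (A - B) = cadj A - cadj B"
  by (simp add: cadj_def vec_eq_iff)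
lemma cadj_uminus: "cadj (- B) = - cadj B"
  by (simp add: cadj_def vec_eq_iff)
lemma cadj_cadj: "cadj (cadj A) = A"
  by (simp add: cadj_def vec_eq_iff)
lemma cadj_mat: "cadj (mat c) = mat (cnj c)"
  by (simp add: cadj_def mat_def vec_eq_iff)

lemma mat_l: "mat c ** (A::complex^'m^'n) = (\<chi> i j. c * A$i$j)"
  unfolding matrix_matrix_mult_def mat_def
  by (auto simp: vec_eq_iff if_distrib if_distribR sum.delta' cong: if_cong)
lemma mat_r: "(A::complex^'m^'n) ** mat c = (\<chi> i j. c * A$i$j)"
  unfolding matrix_matrix_mult_def mat_def
  by (auto simp: vec_eq_iff if_distrib if_distribR sum.delta mult.commute cong: if_cong)
lemma mat_comm: "mat c ** (A::complex^'m^'n) = A ** mat c"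
  by (simp add: mat_l mat_r)

lemma mat_mult_mat: "mat a ** mat b = (mat (a*b) :: complex^'n^'n)"
  by (simp add: mat_l) (simp add: mat_def vec_eq_iff)

lemma mat_diff: "mat a - mat b = (mat (a-b) :: complex^'n^'n)"
  by (simp add: mat_def vec_eq_iff)
lemma mat_add: "mat a + mat b = (mat (a+b) :: complex^'n^'n)"
  by (simp add: mat_def vec_eq_iff)

lemma matrix_sub_ldistrib: "(A::complex^'m^'n) ** (B - C) = A ** B - A ** C"
  by (simp add: matrix_matrix_mult_def vec_eq_iff sum_subtractf right_diff_distrib left_diff_distrib)
lemma matrix_sub_rdistrib: "((B::complex^'m^'n) - C) ** A = B ** A - C ** A"
  by (simp add: matrix_matrix_mult_def vec_eq_iff sum_subtractf right_diff_distrib left_diff_distrib)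
lemma matrix_neg_l: "(- (B::complex^'m^'n)) ** A = - (B ** A)"
  by (simp add: matrix_matrix_mult_def vec_eq_iff sum_negf)
lemma matrix_neg_r: "(A::complex^'m^'n) ** (- B) = - (A ** B)"
  by (simp add: matrix_matrix_mult_def vec_eq_iff sum_negf)


lemma bl_axis: "bounded_linear (axis i :: 'a::real_normed_vector \<Rightarrow> 'a^'n)"
proof (rule bounded_linear_intro)
  show "norm (axis i x :: 'a^'n) \<le> norm x * 1" for x
  proof -
    have "norm (axis i x :: 'a^'n) \<le> (\<Sum>j\<in>UNIV. norm (axis i x $ j))" unfolding norm_vec_def by (rule L2_set_le_sum) simp
    also have "\<dots> = (\<Sum>j\<in>UNIV. if j = i then norm x else 0)"
      by (rule sum.cong) (auto simp: axis_def)
    also have "\<dots> = norm x" by simp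
    finally show ?thesis by simp
  qed
qed (auto simp: axis_def vec_eq_iff)

lemma vec_axis_sum: "g = (\<Sum>i\<in>UNIV. axis i (g $ i) :: 'a::real_normed_vector^'n)"
proof -
  have "(\<Sum>i\<in>UNIV. axis i (g $ i) :: 'a^'n) $ j = g $ j" for j
  proof -
    have "(\<Sum>i\<in>UNIV. axis i (g $ i) :: 'a^'n) $ j = (\<Sum>i\<in>UNIV. axis i (g $ i) $ j)"
      by (rule sum_component)
    also have "\<dots> = (\<Sum>i\<in>UNIV. if i = j then g $ j else 0)"
      by (rule sum.cong) (auto simp: axis_def)
    finally show ?thesis by simp
  qed
  thus ?thesis by (simp add: vec_eq_iff)
qed

lemma hvd_vec:
  fixes f :: "real \<Rightarrow> 'a::real_normed_vector^'n"
  assumes "\<And>i. ((\<lambda>t. f t $ i) has_vector_derivative f' $ i) F"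
  shows "(f has_vector_derivative f') F"
proof -
  have "((\<lambda>t. \<Sum>i\<in>UNIV. axis i (f t $ i)) has_vector_derivative (\<Sum>i\<in>UNIV. axis i (f' $ i))) F"
    by (intro has_vector_derivative_sum bounded_linear.has_vector_derivative[OF bl_axis] assms)
  thus ?thesis by (simp flip: vec_axis_sum)
qed


lemma mp_scale: "mat_pow (t *\<^sub>R B) k = t^k *\<^sub>R mat_pow (B::complex^'n^'n) k"
  by (induction k) (simp_all add: scalar_matrix_assoc[symmetric] matrix_scalar_ac)

lemma mexp_scale: "mexp (t *\<^sub>R B) = (\<Sum>k. (t^k / fact k) *\<^sub>R mat_pow (B::complex^'n^'n) k)"
  unfolding mexp_def mp_scale by simp

lemma mp_bound:
  assumes K: "\<And>(A::complex^'n^'n) (C::complex^'n^'n). norm (A ** C) \<le> norm A * norm C * K" and "K \<ge> 0"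
  shows "norm (mat_pow (B::complex^'n^'n) k) \<le> norm (mat 1 :: complex^'n^'n) * (K * norm B)^k"
proof (induction k)
  case 0 then show ?case by simp
next
  case (Suc k)
  have "norm (mat_pow B (Suc k)) \<le> norm B * norm (mat_pow B k) * K" unfolding mat_pow.simps by (rule K)
  also have "\<dots> \<le> norm B * (norm (mat 1 :: complex^'n^'n) * (K * norm B)^k) * K"
    using Suc \<open>K\<ge>0\<close> by (intro mult_right_mono mult_left_mono) auto
  also have "\<dots> = norm (mat 1 :: complex^'n^'n) * (K * norm B)^Suc k" by (simp add: algebra_simps)
  finally show ?case .
qed

lemma summable_expmaj: "summable (\<lambda>n. C * (r^n / fact n) :: real)"
  using summable_exp[of r] by (intro summable_mult) (simp add: field_simps)

lemma summable_dexpmaj: "summable (\<lambda>n. C * (of_nat n * R^(n-1) * c^n / fact n) :: real)"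
proof -
  have e: "(\<lambda>n. (C*c) * ((R*c)^n / fact n)) = (\<lambda>n. C * (of_nat (Suc n) * R^(Suc n - 1) * c^(Suc n) / fact (Suc n)))"
    by (rule ext) (simp add: power_mult_distrib divide_simps)
  have "summable (\<lambda>n. C * (of_nat (Suc n) * R^(Suc n - 1) * c^(Suc n) / fact (Suc n)))"
    using summable_expmaj[of "C*c" "R*c"] unfolding e .
  thus ?thesis using summable_Suc_iff[where f="\<lambda>n. C * (of_nat n * R^(n-1) * c^n / fact n)"] by blast
qed


lemma mexp_hvd: "((\<lambda>t. mexp (t *\<^sub>R B)) has_vector_derivative (B ** mexp (t0 *\<^sub>R (B::complex^'n^'n)))) (at t0)"
proof -
  obtain K where K0: "K > 0" and K: "\<And>(A::complex^'n^'n) (C::complex^'n^'n). norm (A ** C) \<le> norm A * norm C * K"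
    using bounded_bilinear.pos_bounded[OF bb_mm] by blast
  define M where "M k = mat_pow B k" for k
  define C0 where "C0 = norm (mat 1 :: complex^'n^'n)"
  define c where "c = K * norm B"
  have c0: "c \<ge> 0" "C0 \<ge> 0" using K0 by (auto simp: c_def C0_def)
  have Mb: "norm (M k) \<le> C0 * c^k" for k
    unfolding M_def C0_def c_def by (rule mp_bound[OF K]) (use K0 in simp)
  define R where "R = \<bar>t0\<bar> + 1"
  define S where "S = {-R<..<R}"
  define f where "f n x = (x^n / fact n) *\<^sub>R M n" for n x
  define d where "d n x = (of_nat n * x^(n-1) / fact n) *\<^sub>R M n" for n x
  have fsum: "summable (\<lambda>n. f n x)" for x
  proof (rule summable_comparison_test')
    show "summable (\<lambda>n. C0 * ((\<bar>x\<bar>*c)^n / fact n))" by (rule summable_expmaj)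
    fix n
    have "norm (f n x) = (\<bar>x\<bar>^n / fact n) * norm (M n)" by (simp add: f_def power_abs)
    also have "\<dots> \<le> (\<bar>x\<bar>^n / fact n) * (C0 * c^n)" by (intro mult_left_mono Mb) auto
    also have "\<dots> = C0 * ((\<bar>x\<bar>*c)^n / fact n)" by (simp add: power_mult_distrib)
    finally show "norm (f n x) \<le> C0 * ((\<bar>x\<bar>*c)^n / fact n)" .
  qed
  define E where "E x = (\<Sum>n. f n x)" for x
  have Emexp: "E x = mexp (x *\<^sub>R B)" for x
    unfolding E_def f_def M_def mexp_scale by simp
  have blB: "bounded_linear (\<lambda>C::complex^'n^'n. B ** C)"
    by (rule bounded_bilinear.bounded_linear_right[OF bb_mm])
  have dsum: "(\<lambda>n. d n x) sums (B ** E x)" for x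
  proof -
    have "(\<lambda>n. B ** f n x) sums (B ** E x)"
      unfolding E_def by (rule bounded_linear.sums[OF blB summable_sums[OF fsum]])
    moreover have "d (Suc n) x = B ** f n x" for n
      by (simp add: d_def f_def M_def matrix_scalar_ac scalar_matrix_assoc divide_simps)
    ultimately have "(\<lambda>n. d (Suc n) x) sums (B ** E x)" by simp
    hence "(\<lambda>n. d n x) sums (B ** E x + d 0 x)" using sums_Suc_iff[where f="\<lambda>n. d n x"] by blast
    thus ?thesis by (simp add: d_def)
  qed
  have unif: "uniform_limit S (\<lambda>n x. \<Sum>i<n. d i x) (\<lambda>x. \<Sum>i. d i x) sequentially"
  proof (rule Weierstrass_m_test)
    show "summable (\<lambda>n. C0 * (of_nat n * R^(n-1) * c^n / fact n))" by (rule summable_dexpmaj)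
    fix n x assume x: "x \<in> S"
    hence xR: "\<bar>x\<bar> \<le> R" by (auto simp: S_def)
    have "norm (d n x) = (of_nat n * \<bar>x\<bar>^(n-1) / fact n) * norm (M n)" by (simp add: d_def power_abs abs_mult)
    also have "\<dots> \<le> (of_nat n * R^(n-1) / fact n) * (C0 * c^n)"
      by (intro mult_mono divide_right_mono mult_left_mono power_mono Mb xR) (auto simp: R_def)
    also have "\<dots> = C0 * (of_nat n * R^(n-1) * c^n / fact n)" by simp
    finally show "norm (d n x) \<le> C0 * (of_nat n * R^(n-1) * c^n / fact n)" .
  qed
  have dE: "(\<Sum>i. d i x) = B ** E x" for x using dsum sums_unique by metis
  have t0S: "t0 \<in> S" by (auto simp: S_def R_def)
  have "\<exists>g. \<forall>x\<in>S. (\<lambda>n. f n x) sums (g x) \<and> (g has_derivative (\<lambda>h. h *\<^sub>R (B ** E x))) (at x within S)"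
  proof (rule has_derivative_series[where f' = "\<lambda>n x h. h *\<^sub>R d n x"])
    show "convex S" by (simp add: S_def)
    show "t0 \<in> S" by (rule t0S)
    show "(\<lambda>n. f n t0) sums (E t0)" unfolding E_def by (rule summable_sums[OF fsum])
    fix n x assume "x \<in> S"
    have "((\<lambda>x. x^n / fact n) has_real_derivative (of_nat n * x^(n-1) / fact n)) (at x within S)"
      by (auto intro!: derivative_eq_intros)
    hence "((\<lambda>x. (x^n / fact n) *\<^sub>R M n) has_vector_derivative
            ((x^n / fact n) *\<^sub>R 0 + (of_nat n * x^(n-1) / fact n) *\<^sub>R M n)) (at x within S)"
      by (rule has_vector_derivative_scaleR) simp
    thus "(f n has_derivative (\<lambda>h. h *\<^sub>R d n x)) (at x within S)"
      by (simp add: f_def[abs_def] d_def has_vector_derivative_def)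
  next
    fix e :: real assume "e > 0"
    have "\<forall>\<^sub>F n in sequentially. \<forall>x\<in>S. dist (\<Sum>i<n. d i x) (\<Sum>i. d i x) < e"
      by (rule uniform_limitD[OF unif \<open>e>0\<close>])
    thus "\<forall>\<^sub>F n in sequentially. \<forall>x\<in>S. \<forall>h. norm ((\<Sum>i<n. h *\<^sub>R d i x) - h *\<^sub>R (B ** E x)) \<le> e * norm h"
    proof (rule eventually_mono)
      fix n assume H: "\<forall>x\<in>S. dist (\<Sum>i<n. d i x) (\<Sum>i. d i x) < e"
      show "\<forall>x\<in>S. \<forall>h. norm ((\<Sum>i<n. h *\<^sub>R d i x) - h *\<^sub>R (B ** E x)) \<le> e * norm h"
      proof (intro ballI allI)
        fix x h assume "x \<in> S"
        hence "norm ((\<Sum>i<n. d i x) - B ** E x) \<le> e" using H by (auto simp: dist_norm dE)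
        hence "\<bar>h\<bar> * norm ((\<Sum>i<n. d i x) - B ** E x) \<le> \<bar>h\<bar> * e" by (rule mult_left_mono) simp
        thus "norm ((\<Sum>i<n. h *\<^sub>R d i x) - h *\<^sub>R (B ** E x)) \<le> e * norm h"
          by (simp add: scaleR_sum_right[symmetric] scaleR_diff_right[symmetric] mult.commute)
      qed
    qed
  qed
  then obtain g where g: "\<And>x. x \<in> S \<Longrightarrow> (\<lambda>n. f n x) sums (g x) \<and> (g has_derivative (\<lambda>h. h *\<^sub>R (B ** E x))) (at x within S)"
    by blast
  have gE: "x \<in> S \<Longrightarrow> g x = mexp (x *\<^sub>R B)" for x
    using g[of x] summable_sums[OF fsum, of x] sums_unique2 Emexp E_def by metis
  have "open S" by (simp add: S_def)
  have "(g has_derivative (\<lambda>h. h *\<^sub>R (B ** E t0))) (at t0)"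
    using g[OF t0S] at_within_open[OF t0S \<open>open S\<close>] by simp
  hence "((\<lambda>t. mexp (t *\<^sub>R B)) has_derivative (\<lambda>h. h *\<^sub>R (B ** E t0))) (at t0)"
    by (rule has_derivative_transform_within_open[OF _ \<open>open S\<close> t0S]) (simp add: gE)
  thus ?thesis by (simp add: has_vector_derivative_def Emexp)
qed


lemma differentiable_prod':
  fixes f :: "'i \<Rightarrow> real \<Rightarrow> complex"
  assumes "finite I" "\<And>i. i \<in> I \<Longrightarrow> f i differentiable (at x)"
  shows "(\<lambda>t. \<Prod>i\<in>I. f i t) differentiable (at x)"
proof -
  have "\<forall>i\<in>I. \<exists>D. (f i has_derivative D) (at x)"
    using assms(2) unfolding differentiable_def by blast
  then obtain f' where f': "\<forall>i\<in>I. (f i has_derivative f' i) (at x)"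
    by (rule bchoice[elim_format]) blast
  have "((\<lambda>t. \<Prod>i\<in>I. f i t) has_derivative (\<lambda>y. \<Sum>i\<in>I. f' i y * (\<Prod>j\<in>I - {i}. f j x))) (at x)"
    by (rule has_derivative_prod) (use f' in blast)
  thus ?thesis unfolding differentiable_def by blast
qed


lemma det_differentiable:
  fixes F :: "real \<Rightarrow> complex^'n^'n"
  assumes "\<And>i j. (\<lambda>t. F t $ i $ j) differentiable (at x)"
  shows "(\<lambda>t. det (F t)) differentiable (at x)"
proof -
  have "(\<lambda>t. of_int (sign p) * (\<Prod>i\<in>UNIV. F t $ i $ p i)) differentiable (at x)" for p
    by (rule differentiable_mult[OF differentiable_const differentiable_prod'[OF finite assms]])
  hence "(\<lambda>t. \<Sum>p\<in>{p. p permutes (UNIV::'n set)}. of_int (sign p) * (\<Prod>i\<in>UNIV. F t $ i $ p i)) differentiable (at x)"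
    by (intro differentiable_sum finite_permutations finite_UNIV) auto
  thus ?thesis unfolding det_def .
qed

lemma matrix_inv_unique:
  fixes A :: "complex^'n^'n"
  assumes "det A \<noteq> 0"
  shows "A ** matrix_inv A = mat 1" "matrix_inv A ** A = mat 1"
proof -
  have "invertible A" using assms invertible_det_nz by blast
  hence "\<exists>A'. A ** A' = mat 1 \<and> A' ** A = mat 1" unfolding invertible_def .
  hence "A ** matrix_inv A = mat 1 \<and> matrix_inv A ** A = mat 1"
    unfolding matrix_inv_def by (rule someI_ex)
  thus "A ** matrix_inv A = mat 1" "matrix_inv A ** A = mat 1" by auto
qed

lemma matrix_inv_entry:
  fixes A :: "complex^'n^'n"
  assumes "det A \<noteq> 0"
  shows "matrix_inv A $ k $ j = det (\<chi> i l. if l = k then axis j 1 $ i else A$i$l) / det A"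
proof -
  have "A *v (matrix_inv A *v axis j 1) = axis j 1"
    by (simp add: matrix_vector_mul_assoc matrix_inv_unique[OF assms])
  hence "matrix_inv A *v axis j 1 = (\<chi> k. det (\<chi> i l. if l = k then axis j 1 $ i else A$i$l) / det A)"
    using cramer[OF assms] by blast
  hence "(matrix_inv A *v axis j 1) $ k = det (\<chi> i l. if l = k then axis j 1 $ i else A$i$l) / det A"
    by simp
  moreover have "(matrix_inv A *v axis j 1) $ k = matrix_inv A $ k $ j"
    by (simp add: matrix_vector_mult_def axis_def if_distrib if_distribR sum.delta' cong: if_cong)
  ultimately show ?thesis by simp
qed

lemma differentiable_vec:
  fixes f :: "real \<Rightarrow> complex^'n^'m"
  assumes "\<And>i j. (\<lambda>t. f t $ i $ j) differentiable (at x)"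
  shows "f differentiable (at x)"
proof -
  have "(f has_vector_derivative (\<chi> i j. vector_derivative (\<lambda>t. f t $ i $ j) (at x))) (at x)"
    by (intro hvd_vec) (simp add: assms vector_derivative_works[symmetric])
  thus ?thesis by (rule differentiableI_vector)
qed

lemma inv_differentiable:
  fixes S :: "real \<Rightarrow> complex^'n^'n"
  assumes "S differentiable (at x)" "open U" "x \<in> U" "\<And>t. t \<in> U \<Longrightarrow> det (S t) \<noteq> 0"
  shows "(\<lambda>t. matrix_inv (S t)) differentiable (at x)"
proof -
  have Sij: "(\<lambda>t. S t $ i $ j) differentiable (at x)" for i j
    using differentiable_compose[OF bounded_linear_imp_differentiable[OF bounded_linear_vec_nth]
        differentiable_compose[OF bounded_linear_imp_differentiable[OF bounded_linear_vec_nth] assms(1)]]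
    by simp
  have e: "(\<lambda>t. (\<chi> i l. if l = k then axis j 1 $ i else S t$i$l) $ a $ b) differentiable (at x)" for k j a b
    by (cases "b = k") (simp_all add: Sij)
  have d: "(\<lambda>t. det (\<chi> i l. if l = k then axis j 1 $ i else S t$i$l) / det (S t)) differentiable (at x)" for k j
    by (intro differentiable_divide det_differentiable e Sij assms(4)[OF assms(3)])
  show ?thesis
  proof (rule differentiable_vec)
    fix k j
    show "(\<lambda>t. matrix_inv (S t) $ k $ j) differentiable (at x)"
    proof -
      obtain D where D: "((\<lambda>t. det (\<chi> i l. if l = k then axis j 1 $ i else S t$i$l) / det (S t)) has_derivative D) (at x)"
        using d[of k j] unfolding differentiable_def by blast
      have "((\<lambda>t. matrix_inv (S t) $ k $ j) has_derivative D) (at x)"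
        by (rule has_derivative_transform_within_open[OF D assms(2,3)])
           (simp add: matrix_inv_entry[OF assms(4)])
      thus ?thesis unfolding differentiable_def by blast
    qed
  qed
qed

lemma inv_hvd:
  fixes S T :: "real \<Rightarrow> complex^'n^'n"
  assumes "(S has_vector_derivative S') (at x)" "T differentiable (at x)" "open U" "x \<in> U"
    "\<And>t. t \<in> U \<Longrightarrow> S t ** T t = mat 1" "T x ** S x = mat 1"
  shows "(T has_vector_derivative (- (T x ** S' ** T x))) (at x)"
proof -
  define T' where "T' = vector_derivative T (at x)"
  have T': "(T has_vector_derivative T') (at x)" using assms(2) vector_derivative_works T'_def by blast
  have p: "((\<lambda>t. S t ** T t) has_vector_derivative (S x ** T' + S' ** T x)) (at x)"
    by (rule bounded_bilinear.has_vector_derivative[OF bb_mm assms(1) T'])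
  have c: "((\<lambda>t. S t ** T t) has_vector_derivative 0) (at x)"
    by (rule has_vector_derivative_transform_within_open[OF has_vector_derivative_const assms(3,4)])
       (simp add: assms(5))
  have z: "S x ** T' + S' ** T x = 0" using vector_derivative_unique_at[OF p c] .
  have "T' = T x ** (S x ** T')" by (simp add: matrix_mul_assoc assms(6))
  also have "S x ** T' = - (S' ** T x)" using z by (simp add: eq_neg_iff_add_eq_0)
  finally have "T' = - (T x ** S' ** T x)" by (simp add: matrix_neg_r matrix_mul_assoc)
  thus ?thesis using T' by simp
qed


definition csm :: "complex \<Rightarrow> complex^'m^'n \<Rightarrow> complex^'m^'n" where
  "csm c M = (\<chi> i j. c * M$i$j)"

lemma csm_mult_l: "csm c (A::complex^'m^'n) ** (B::complex^'k^'m) = csm c (A ** B)"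
  by (simp add: csm_def matrix_matrix_mult_def vec_eq_iff sum_distrib_left mult.assoc)
lemma csm_mult_r: "(A::complex^'m^'n) ** csm c (B::complex^'k^'m) = csm c (A ** B)"
  by (simp add: csm_def matrix_matrix_mult_def vec_eq_iff sum_distrib_left algebra_simps)
lemma csm_add: "csm c (A + B) = csm c A + csm c B"
  by (simp add: csm_def vec_eq_iff algebra_simps)
lemma csm_diff: "csm c (A - B) = csm c A - csm c B"
  by (simp add: csm_def vec_eq_iff algebra_simps)
lemma csm_neg: "csm c (- B) = - csm c B"
  by (simp add: csm_def vec_eq_iff algebra_simps)
lemma csm_csm: "csm a (csm b B) = csm (a*b) B"
  by (simp add: csm_def vec_eq_iff algebra_simps)
lemma csm_1: "csm 1 B = B"
  by (simp add: csm_def vec_eq_iff)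
lemma csm_minus1: "csm (-1) B = - B"
  by (simp add: csm_def vec_eq_iff)
lemma cadj_csm: "cadj (csm c B) = csm (cnj c) (cadj B)"
  by (simp add: csm_def cadj_def vec_eq_iff)
lemma mat_csm: "mat c ** (B::complex^'m^'n) = csm c B"
  by (simp add: mat_l csm_def)
lemma csm_add_l: "csm a B + csm b B = csm (a + b) B"
  by (simp add: csm_def vec_eq_iff algebra_simps)

lemma bl_csm: "bounded_linear (csm c :: complex^'m^'n \<Rightarrow> complex^'m^'n)"
proof -
  have "linear (csm c :: complex^'m^'n \<Rightarrow> complex^'m^'n)"
    by (auto intro!: linearI simp: csm_def vec_eq_iff vector_scaleR_component cs algebra_simps)
  thus ?thesis using linear_conv_bounded_linear by blast
qed

definition e12 :: "complex^2^2" where "e12 = (\<chi> i j. if i = 1 \<and> j = 2 then 1 else 0)"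
definition e21 :: "complex^2^2" where "e21 = (\<chi> i j. if i = 2 \<and> j = 1 then 1 else 0)"
definition e22 :: "complex^2^2" where "e22 = (\<chi> i j. if i = 2 \<and> j = 2 then 1 else 0)"

lemma cadj_e12: "cadj e12 = e21" by (simp add: cadj_def e12_def e21_def vec_eq_iff)
lemma cadj_e21: "cadj e21 = e12" by (simp add: cadj_def e12_def e21_def vec_eq_iff)
lemma cadj_e22: "cadj e22 = e22" by (simp add: cadj_def e22_def vec_eq_iff)
lemma J_e: "Jmat = e12 - e21"
  by (simp add: Jmat_def e12_def e21_def vec_eq_iff)

lemmas normM = matrix_mul_assoc matrix_add_ldistrib matrix_add_rdistrib' matrix_sub_ldistrib
  matrix_sub_rdistrib matrix_neg_l matrix_neg_r csm_mult_l csm_mult_r csm_add csm_diff csm_neg csm_csm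

lemma prod3_hvd:
  fixes f :: "real \<Rightarrow> complex^'a^'b" and g :: "real \<Rightarrow> complex^'c^'a" and h :: "real \<Rightarrow> complex^'d^'c"
  assumes "(f has_vector_derivative f') (at x)" "(g has_vector_derivative g') (at x)" "(h has_vector_derivative h') (at x)"
  shows "((\<lambda>t. f t ** g t ** h t) has_vector_derivative (f' ** g x ** h x + f x ** g' ** h x + f x ** g x ** h')) (at x)"
proof -
  have "((\<lambda>t. f t ** g t) has_vector_derivative (f x ** g' + f' ** g x)) (at x)"
    by (rule bounded_bilinear.has_vector_derivative[OF bb_mm assms(1,2)])
  from bounded_bilinear.has_vector_derivative[OF bb_mm this assms(3)]
  show ?thesis by (simp add: normM algebra_simps)
qed

lemma core_M1:
  fixes P :: "real \<Rightarrow> complex^2^'n" and T :: "real \<Rightarrow> complex^'n^'n" and A :: "complex^'n^'n"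
  assumes hP: "(P has_vector_derivative (csm \<sigma> (A ** P x ** e21) - P x ** e12)) (at x)"
    and hT: "(T has_vector_derivative (- csm \<sigma> (T x ** P x ** e22 ** cadj (P x) ** T x))) (at x)"
    and sig: "cnj \<sigma> = \<sigma>"
  shows "((\<lambda>t. cadj (P t) ** T t ** P t) has_vector_derivative
     (csm \<sigma> (e12 ** cadj (P x) ** cadj A ** T x ** P x) - e21 ** (cadj (P x) ** T x ** P x)
      - csm \<sigma> ((cadj (P x) ** T x ** P x) ** e22 ** (cadj (P x) ** T x ** P x))
      + csm \<sigma> (cadj (P x) ** T x ** A ** P x ** e21) - (cadj (P x) ** T x ** P x) ** e12)) (at x)"
proof -
  have hQ: "((\<lambda>t. cadj (P t)) has_vector_derivative cadj (csm \<sigma> (A ** P x ** e21) - P x ** e12)) (at x)"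
    by (rule bounded_linear.has_vector_derivative[OF bl_cadj hP])
  from prod3_hvd[OF hQ hT hP] show ?thesis
    by (simp add: normM cadj_diff cadj_csm cadj_mult cadj_e12 cadj_e21 sig algebra_simps)
qed


lemma core_M2:
  fixes P :: "real \<Rightarrow> complex^2^'n" and T :: "real \<Rightarrow> complex^'n^'n" and A R :: "complex^'n^'n"
  assumes hP: "(P has_vector_derivative (csm \<sigma> (A ** P x ** e21) - P x ** e12)) (at x)"
    and hT: "(T has_vector_derivative (- csm \<sigma> (T x ** P x ** e22 ** cadj (P x) ** T x))) (at x)"
    and sig: "cnj \<sigma> = \<sigma>"
    and hAT: "\<And>X::complex^'n^2. X ** cadj A ** T x = X ** T x ** A - X ** T x ** P x ** Jmat ** cadj (P x) ** T x"
    and hRA: "\<And>X::complex^'n^2. X ** R ** A = X + csm lam (X ** R)"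
    and hAR: "\<And>X::complex^'n^2. X ** A ** R = X + csm lam (X ** R)"
  shows "((\<lambda>t. cadj (P t) ** T t ** R ** P t) has_vector_derivative
     (let M1 = cadj (P x) ** T x ** P x; M2 = cadj (P x) ** T x ** R ** P x in
      csm \<sigma> (e12 ** (M1 + csm lam M2 - M1 ** Jmat ** M2)) - e21 ** M2 - csm \<sigma> (M1 ** e22 ** M2)
      + csm \<sigma> ((M1 + csm lam M2) ** e21) - M2 ** e12)) (at x)"
proof -
  have hQ: "((\<lambda>t. cadj (P t)) has_vector_derivative cadj (csm \<sigma> (A ** P x ** e21) - P x ** e12)) (at x)"
    by (rule bounded_linear.has_vector_derivative[OF bl_cadj hP])
  have hRP: "((\<lambda>t. R ** P t) has_vector_derivative R ** (csm \<sigma> (A ** P x ** e21) - P x ** e12)) (at x)"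
    by (rule bounded_linear.has_vector_derivative[OF bounded_bilinear.bounded_linear_right[OF bb_mm] hP])
  from prod3_hvd[OF hQ hT hRP] show ?thesis
    by (simp add: Let_def normM cadj_diff cadj_csm cadj_mult cadj_e12 cadj_e21 sig hAT hRA hAR algebra_simps)
qed


definition Gm :: "complex \<Rightarrow> complex \<Rightarrow> complex^2^2" where
  "Gm lam \<sigma> = (\<chi> i j. if i = 1 then (if j = 2 then 1 else 0) else (if j = 1 then - lam * \<sigma> else 0))"

lemma alg:
  fixes Ma Mb Za Zb :: "complex^2^2" and y :: "complex^2" and lam \<sigma> :: complex
  and Mad Mbd :: "complex^2^2" and yt ytd :: "complex^2" and X :: "complex^2^2"
  assumes Mad_def: "Mad = csm \<sigma> (e12 ** Za) - e21 ** Ma - csm \<sigma> (Ma ** e22 ** Ma) + csm \<sigma> (Zb ** e21) - Ma ** e12"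
    and Mbd_def: "Mbd = csm \<sigma> (e12 ** (Ma + csm lam Mb - Ma ** Jmat ** Mb)) - e21 ** Mb - csm \<sigma> (Ma ** e22 ** Mb)
      + csm \<sigma> ((Ma + csm lam Mb) ** e21) - Mb ** e12"
    and yt_def: "yt = (mat 1 - Jmat ** Mb) *v y"
    and ytd_def: "ytd = (- (Jmat ** Mbd)) *v y + (mat 1 - Jmat ** Mb) *v (Gm lam \<sigma> *v y)"
    and X_def: "X = Jmat ** Ma"
    and sig: "\<sigma> * \<sigma> = 1"
  shows "ytd $ 1 = - \<sigma> * Ma$2$2 * yt$1 + yt$2"
    and "- (- \<sigma> * (Mad$2$2 * yt$1 + Ma$2$2 * ytd$1) + ytd$2)
         + (2 * \<sigma> * (X$1$1 - X$2$2) + 2 * (X$1$2)^2) * yt$1 = lam * \<sigma> * yt$1"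
proof -
  have s: "\<sigma> * (\<sigma> * z) = z" for z using sig by (simp add: mult.assoc[symmetric])
  show "ytd $ 1 = - \<sigma> * Ma$2$2 * yt$1 + yt$2"
    unfolding ytd_def yt_def Mbd_def
    by (simp add: matrix_matrix_mult_def matrix_vector_mult_def csm_def e12_def e21_def e22_def Jmat_def
        mat_def Gm_def sum_2 algebra_simps)
  show "- (- \<sigma> * (Mad$2$2 * yt$1 + Ma$2$2 * ytd$1) + ytd$2)
         + (2 * \<sigma> * (X$1$1 - X$2$2) + 2 * (X$1$2)^2) * yt$1 = lam * \<sigma> * yt$1"
    unfolding ytd_def yt_def Mbd_def Mad_def X_def
    by (simp add: matrix_matrix_mult_def matrix_vector_mult_def csm_def e12_def e21_def e22_def Jmat_def
        mat_def Gm_def sum_2 algebra_simps power2_eq_square sig s)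
qed


definition "M1f P T t = cadj (P t) ** T t ** P t"
definition "M2f P T R t = cadj (P t) ** T t ** R ** P t"
definition "M1d A \<sigma> P T t = csm \<sigma> (e12 ** (cadj (P t) ** cadj A ** T t ** P t)) - e21 ** M1f P T t
   - csm \<sigma> (M1f P T t ** e22 ** M1f P T t) + csm \<sigma> ((cadj (P t) ** T t ** A ** P t) ** e21) - M1f P T t ** e12"
definition "M2d lam \<sigma> P T R t = csm \<sigma> (e12 ** (M1f P T t + csm lam (M2f P T R t) - M1f P T t ** Jmat ** M2f P T R t))
   - e21 ** M2f P T R t - csm \<sigma> (M1f P T t ** e22 ** M2f P T R t)
   + csm \<sigma> ((M1f P T t + csm lam (M2f P T R t)) ** e21) - M2f P T R t ** e12"
definition "Yf P T R y t = (mat 1 - Jmat ** cadj (P t) ** T t ** R ** P t) *v y t"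
definition "Ydf lam \<sigma> P T R y t = (- (Jmat ** M2d lam \<sigma> P T R t)) *v y t
   + (mat 1 - Jmat ** M2f P T R t) *v (Gm lam \<sigma> *v y t)"
definition "F1f \<sigma> P T R y t = - \<sigma> * M1f P T t $2$2 * Yf P T R y t $1 + Yf P T R y t $2"
definition "F2f A lam \<sigma> P T R y t = - \<sigma> * (M1d A \<sigma> P T t $2$2 * Yf P T R y t $1
    + M1f P T t $2$2 * Ydf lam \<sigma> P T R y t $1) + Ydf lam \<sigma> P T R y t $2"

lemma local_main:
  fixes P :: "real \<Rightarrow> complex^2^'n" and T :: "real \<Rightarrow> complex^'n^'n" and A R :: "complex^'n^'n"
    and y :: "real \<Rightarrow> complex^2"
  assumes U: "open U" "x \<in> U"
    and hP: "\<And>t. t \<in> U \<Longrightarrow> (P has_vector_derivative (csm \<sigma> (A ** P t ** e21) - P t ** e12)) (at t)"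
    and hT: "\<And>t. t \<in> U \<Longrightarrow> (T has_vector_derivative (- csm \<sigma> (T t ** P t ** e22 ** cadj (P t) ** T t))) (at t)"
    and hAT: "\<And>t X. t \<in> U \<Longrightarrow> (X::complex^'n^2) ** cadj A ** T t = X ** T t ** A - X ** T t ** P t ** Jmat ** cadj (P t) ** T t"
    and hRA: "\<And>X::complex^'n^2. X ** R ** A = X + csm lam (X ** R)"
    and hAR: "\<And>X::complex^'n^2. X ** A ** R = X + csm lam (X ** R)"
    and sig: "cnj \<sigma> = \<sigma>" "\<sigma> * \<sigma> = 1"
    and hy: "\<And>t. t \<in> U \<Longrightarrow> (y has_vector_derivative (Gm lam \<sigma> *v y t)) (at t)"
  shows "((\<lambda>t. Yf P T R y t $ 1) has_vector_derivative F1f \<sigma> P T R y x) (at x)"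
    and "(F1f \<sigma> P T R y has_vector_derivative F2f A lam \<sigma> P T R y x) (at x)"
    and "- F2f A lam \<sigma> P T R y x + (2 * \<sigma> * ((Jmat ** cadj (P x) ** T x ** P x)$1$1 - (Jmat ** cadj (P x) ** T x ** P x)$2$2)
           + 2 * ((Jmat ** cadj (P x) ** T x ** P x)$1$2)^2) * Yf P T R y x $ 1
         = lam * \<sigma> * Yf P T R y x $ 1"
proof -
  have dM1: "(M1f P T has_vector_derivative M1d A \<sigma> P T t) (at t)" if "t \<in> U" for t
    using core_M1[OF hP[OF that] hT[OF that] sig(1)]
    unfolding M1f_def[abs_def] M1d_def by (simp add: matrix_mul_assoc)
  have dM2: "(M2f P T R has_vector_derivative M2d lam \<sigma> P T R t) (at t)" if "t \<in> U" for t
    using core_M2[OF hP[OF that] hT[OF that] sig(1) hAT[OF that] hRA hAR]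
    unfolding M2f_def[abs_def] M2d_def M1f_def by (simp add: Let_def)
  have Yeq: "Yf P T R y t = (mat 1 - Jmat ** M2f P T R t) *v y t" for t
    by (simp add: Yf_def M2f_def matrix_mul_assoc)
  have dY: "(Yf P T R y has_vector_derivative Ydf lam \<sigma> P T R y t) (at t)" if "t \<in> U" for t
  proof -
    have dW: "((\<lambda>t. mat 1 - Jmat ** M2f P T R t) has_vector_derivative (- (Jmat ** M2d lam \<sigma> P T R t))) (at t)"
      using has_vector_derivative_diff[OF has_vector_derivative_const
          bounded_linear.has_vector_derivative[OF bounded_bilinear.bounded_linear_right[OF bb_mm] dM2[OF that]]]
      by simp
    from bounded_bilinear.has_vector_derivative[OF bb_mv dW hy[OF that]]
    show ?thesis unfolding Yeq[abs_def] Ydf_def by (simp add: algebra_simps)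
  qed
  have alg1: "Ydf lam \<sigma> P T R y t $ 1 = F1f \<sigma> P T R y t" for t
    unfolding F1f_def
    by (rule alg(1)[where Ma="M1f P T t" and Mb="M2f P T R t" and Za="cadj (P t) ** cadj A ** T t ** P t" and Zb="cadj (P t) ** T t ** A ** P t" and y="y t" and lam=lam and \<sigma>=\<sigma> and Mad="M1d A \<sigma> P T t" and Mbd="M2d lam \<sigma> P T R t" and yt="Yf P T R y t" and ytd="Ydf lam \<sigma> P T R y t" and X="Jmat ** M1f P T t", OF M1d_def M2d_def Yeq Ydf_def refl sig(2)])
  have alg2: "- F2f A lam \<sigma> P T R y t + (2 * \<sigma> * ((Jmat ** cadj (P t) ** T t ** P t)$1$1 - (Jmat ** cadj (P t) ** T t ** P t)$2$2)
           + 2 * ((Jmat ** cadj (P t) ** T t ** P t)$1$2)^2) * Yf P T R y t $ 1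
         = lam * \<sigma> * Yf P T R y t $ 1" for t
    using alg(2)[where Ma="M1f P T t" and Mb="M2f P T R t" and Za="cadj (P t) ** cadj A ** T t ** P t" and Zb="cadj (P t) ** T t ** A ** P t" and y="y t" and lam=lam and \<sigma>=\<sigma> and Mad="M1d A \<sigma> P T t" and Mbd="M2d lam \<sigma> P T R t" and yt="Yf P T R y t" and ytd="Ydf lam \<sigma> P T R y t" and X="Jmat ** M1f P T t", OF M1d_def M2d_def Yeq Ydf_def refl sig(2)]
    unfolding F2f_def M1f_def by (simp add: matrix_mul_assoc)
  show "((\<lambda>t. Yf P T R y t $ 1) has_vector_derivative F1f \<sigma> P T R y x) (at x)"
    using bounded_linear.has_vector_derivative[OF bounded_linear_vec_nth dY[OF U(2)], of 1]
    by (simp add: alg1)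
  show "- F2f A lam \<sigma> P T R y x + (2 * \<sigma> * ((Jmat ** cadj (P x) ** T x ** P x)$1$1 - (Jmat ** cadj (P x) ** T x ** P x)$2$2)
           + 2 * ((Jmat ** cadj (P x) ** T x ** P x)$1$2)^2) * Yf P T R y x $ 1
         = lam * \<sigma> * Yf P T R y x $ 1" by (rule alg2)
  have c: "\<And>i j. ((\<lambda>t. M1f P T t $ i $ j) has_vector_derivative M1d A \<sigma> P T x $ i $ j) (at x)"
    using bounded_linear.has_vector_derivative[OF bounded_linear_vec_nth
          bounded_linear.has_vector_derivative[OF bounded_linear_vec_nth dM1[OF U(2)]]] by simp
  have d: "\<And>i. ((\<lambda>t. Yf P T R y t $ i) has_vector_derivative Ydf lam \<sigma> P T R y x $ i) (at x)"
    using bounded_linear.has_vector_derivative[OF bounded_linear_vec_nth dY[OF U(2)]] by simp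
  have "((\<lambda>t. - \<sigma> * M1f P T t $2$2 * Yf P T R y t $1 + Yf P T R y t $2) has_vector_derivative
      (- \<sigma> * (M1f P T x $2$2 * Ydf lam \<sigma> P T R y x $ 1 + M1d A \<sigma> P T x $ 2 $ 2 * Yf P T R y x $1)
       + Ydf lam \<sigma> P T R y x $ 2)) (at x)"
    using has_vector_derivative_add[OF has_vector_derivative_mult[OF
          has_vector_derivative_mult[OF has_vector_derivative_const[of "- \<sigma>"] c[of 2 2]] d[of 1]] d[of 2]]
    by (simp add: algebra_simps)
  thus "(F1f \<sigma> P T R y has_vector_derivative F2f A lam \<sigma> P T R y x) (at x)"
    unfolding F1f_def[abs_def] F2f_def by (simp add: algebra_simps)
qed


definition mk :: "complex^'n \<Rightarrow> complex^'n \<Rightarrow> complex^2^'n" where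
  "mk u v = (\<chi> i j. if j = 1 then u$i else v$i)"

definition "G2 B a b t = mexp (t *\<^sub>R B) *v a + mexp (t *\<^sub>R (- B)) *v b"
definition "G1 B a b t = - (B *v (mexp (t *\<^sub>R B) *v a - mexp (t *\<^sub>R (- B)) *v b))"

lemma matrix_vector_neg: "(- (A::complex^'m^'n)) *v v = - (A *v v)"
  by (simp add: matrix_vector_mult_def vec_eq_iff sum_negf)

lemma E_hvd: "((\<lambda>t. mexp (t *\<^sub>R B) *v a) has_vector_derivative ((B ** mexp (t *\<^sub>R B)) *v a)) (at t)"
  using bounded_bilinear.has_vector_derivative[OF bb_mv mexp_hvd[of B t] has_vector_derivative_const[of a]]
  by simp

lemma G2_hvd: "(G2 B a b has_vector_derivative (- G1 B a b t)) (at t)"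
proof -
  have "(G2 B a b has_vector_derivative ((B ** mexp (t *\<^sub>R B)) *v a + ((- B) ** mexp (t *\<^sub>R (- B))) *v b)) (at t)"
    unfolding G2_def[abs_def] by (intro has_vector_derivative_add E_hvd)
  thus ?thesis
    by (simp add: G1_def matrix_vector_mul_assoc[symmetric] matrix_neg_l matrix_vector_neg algebra_simps)
qed

lemma G1_hvd: "(G1 B a b has_vector_derivative (- ((B ** B) *v G2 B a b t))) (at t)"
proof -
  have "(G1 B a b has_vector_derivative - (B *v ((B ** mexp (t *\<^sub>R B)) *v a - ((- B) ** mexp (t *\<^sub>R (- B))) *v b))) (at t)"
    unfolding G1_def[abs_def]
    by (intro has_vector_derivative_minus bounded_linear.has_vector_derivative[OF bounded_bilinear.bounded_linear_right[OF bb_mv]]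
        has_vector_derivative_diff E_hvd)
  thus ?thesis
    by (simp add: G2_def matrix_vector_mul_assoc[symmetric] matrix_neg_l matrix_vector_neg algebra_simps)
qed

lemma mk_hvd:
  assumes "(u has_vector_derivative u') (at t)" "(v has_vector_derivative v') (at t)"
  shows "((\<lambda>t. mk (u t) (v t)) has_vector_derivative mk u' v') (at t)"
proof (rule hvd_vec, rule hvd_vec)
  fix i j
  show "((\<lambda>t. mk (u t) (v t) $ i $ j) has_vector_derivative mk u' v' $ i $ j) (at t)"
    using bounded_linear.has_vector_derivative[OF bounded_linear_vec_nth assms(1), of i]
      bounded_linear.has_vector_derivative[OF bounded_linear_vec_nth assms(2), of i]
    by (simp add: mk_def)
qed

lemma mk_deriv_eq:
  assumes "C = csm \<sigma> (A::complex^'n^'n)"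
  shows "mk (C *v v) (- u) = csm \<sigma> (A ** mk u v ** e21) - mk u v ** e12"
  using assms
  by (simp add: mk_def csm_def e21_def e12_def matrix_matrix_mult_def matrix_vector_mult_def vec_eq_iff
      sum_2 sum_distrib_left forall_2 mult.assoc)

definition "Pc B a b t = mk (G1 B a b t) (G2 B a b t)"

lemma Pc_hvd:
  assumes "- (B ** B) = csm \<sigma> A"
  shows "(Pc B a b has_vector_derivative (csm \<sigma> (A ** Pc B a b t ** e21) - Pc B a b t ** e12)) (at t)"
proof -
  have "(Pc B a b has_vector_derivative mk (- ((B ** B) *v G2 B a b t)) (- G1 B a b t)) (at t)"
    unfolding Pc_def[abs_def] by (intro mk_hvd G1_hvd G2_hvd)
  moreover have "- ((B ** B) *v G2 B a b t) = csm \<sigma> A *v G2 B a b t"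
    using assms matrix_vector_neg by metis
  ultimately show ?thesis
    using mk_deriv_eq[of "csm \<sigma> A" \<sigma> A "G2 B a b t" "G1 B a b t"]
    by (simp add: Pc_def)
qed


lemma e21J: "(X::complex^2^'n) ** e21 ** Jmat = X ** e22"
  by (simp add: matrix_mul_assoc[symmetric]) (simp add: e21_def e22_def Jmat_def matrix_matrix_mult_def sum_2 vec_eq_iff forall_2)
lemma e12J: "(X::complex^2^'n) ** e12 ** Jmat = - (X ** Jmat ** e21)"
proof -
  have "e12 ** Jmat = - (Jmat ** e21)"
    by (simp add: e21_def e12_def Jmat_def matrix_matrix_mult_def sum_2 vec_eq_iff forall_2)
  thus ?thesis by (simp add: matrix_mul_assoc[symmetric] matrix_neg_r)
qed
lemma Je12: "(X::complex^2^'n) ** Jmat ** e12 = - (X ** e22)"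
proof -
  have "Jmat ** e12 = - e22"
    by (simp add: e22_def e12_def Jmat_def matrix_matrix_mult_def sum_2 vec_eq_iff forall_2)
  thus ?thesis by (simp add: matrix_mul_assoc[symmetric] matrix_neg_r)
qed

definition "Phic B a b t = Pc B a b t ** Jmat ** cadj (Pc B a b t)"

lemma Phic_hvd:
  assumes "- (B ** B) = csm \<sigma> A" "cnj \<sigma> = \<sigma>"
  shows "(Phic B a b has_vector_derivative
     csm \<sigma> (A ** (Pc B a b t ** e22 ** cadj (Pc B a b t)) - (Pc B a b t ** e22 ** cadj (Pc B a b t)) ** cadj A)) (at t)"
proof -
  note hP = Pc_hvd[OF assms(1), of a b t]
  have hQ: "((\<lambda>t. cadj (Pc B a b t)) has_vector_derivative cadj (csm \<sigma> (A ** Pc B a b t ** e21) - Pc B a b t ** e12)) (at t)"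
    by (rule bounded_linear.has_vector_derivative[OF bl_cadj hP])
  from prod3_hvd[OF hP has_vector_derivative_const[of Jmat] hQ]
  show ?thesis unfolding Phic_def[abs_def]
    by (simp add: normM cadj_diff cadj_csm cadj_mult cadj_e12 cadj_e21 assms(2) e21J e12J Je12 algebra_simps)
qed

lemma outer_mk: "outer v = mk u v ** e22 ** cadj (mk u v)"
  by (simp add: outer_def mk_def e22_def cadj_def matrix_matrix_mult_def sum_2 vec_eq_iff if_distrib if_distribR
      sum.delta' cong: if_cong)

lemma mv_smult: "(A::complex^'m^'n) *v (c *s v) = c *s (A *v v)"
  by (simp add: matrix_vector_mult_def vec_eq_iff sum_distrib_left algebra_simps)
lemma cscale_mv: "cscale c (A::complex^'n^'n) *v v = c *s (A *v v)"
  by (simp add: cscale_def matrix_vector_mul_assoc[symmetric] mat_l matrix_vector_mult_def vec_eq_iff sum_distrib_left mult.assoc)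
lemma mat_mv: "mat c *v (v::complex^'n) = c *s v"
  by (metis cscale_def cscale_mv matrix_mul_rid matrix_vector_mul_lid)

lemma Phi0_gen:
  assumes "u = c1 *s w" "v = c2 *s w" "c1 * cnj c2 = c2 * cnj c1"
  shows "mk u v ** Jmat ** cadj (mk u v) = 0"
  using assms
  by (simp add: mk_def Jmat_def cadj_def matrix_matrix_mult_def sum_2 vec_eq_iff forall_2 algebra_simps)

lemma mexp0: "mexp (0 *\<^sub>R (B::complex^'n^'n)) = mat 1"
proof -
  have "(\<lambda>k. (0^k / fact k) *\<^sub>R mat_pow B k) = (\<lambda>k. if k = 0 then mat 1 else 0)"
    by (rule ext) simp
  moreover have "(\<lambda>k. if k = 0 then mat 1 else 0) sums (mat 1 :: complex^'n^'n)"
    using sums_single[of 0 "\<lambda>_. mat 1 :: complex^'n^'n"] by simp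
  ultimately show ?thesis unfolding mexp_scale by (simp add: sums_iff)
qed


lemma cscale_t: "cscale (c * of_real t) (M::complex^'n^'n) = t *\<^sub>R cscale c M"
  by (simp add: cscale_def mat_l vec_eq_iff cs mult_ac)
lemma cscale_t1: "cscale (of_real t) (M::complex^'n^'n) = t *\<^sub>R M"
  by (simp add: cscale_def mat_l vec_eq_iff cs mult_ac)
lemma cscale_t2: "cscale (- of_real t) (M::complex^'n^'n) = t *\<^sub>R (- M)"
  by (simp add: cscale_def mat_l vec_eq_iff cs mult_ac)
lemma cscale_t3: "cscale (- \<i> * of_real t) (M::complex^'n^'n) = t *\<^sub>R (- cscale \<i> M)"
  by (simp add: cscale_def mat_l vec_eq_iff cs mult_ac)

lemma cscale_t3': "cscale (- (\<i> * of_real t)) (M::complex^'n^'n) = - (t *\<^sub>R cscale \<i> M)"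
  by (simp add: cscale_def mat_l vec_eq_iff cs mult_ac)

lemma PiM_mk: "PiM \<alpha> \<mu> g t = mk (Lam1 \<alpha> \<mu> g t) (Lam2 \<alpha> \<mu> g t)"
  by (simp add: PiM_def mk_def)

lemma Lam1_pos: "t \<ge> 0 \<Longrightarrow> Lam1 \<alpha> \<mu> g t = G1 (cscale \<i> \<alpha>) ((cscale \<mu> \<alpha> + mat 1) *v g) ((cscale \<mu> \<alpha> - mat 1) *v g) t"
  by (simp add: Lam1_def G1_def cscale_t cscale_t3')
lemma Lam2_pos: "t \<ge> 0 \<Longrightarrow> Lam2 \<alpha> \<mu> g t = G2 (cscale \<i> \<alpha>) ((cscale \<mu> \<alpha> + mat 1) *v g) ((cscale \<mu> \<alpha> - mat 1) *v g) t"
  by (simp add: Lam2_def G2_def cscale_t cscale_t3')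
lemma PiM_pos: "t \<ge> 0 \<Longrightarrow> PiM \<alpha> \<mu> g t = Pc (cscale \<i> \<alpha>) ((cscale \<mu> \<alpha> + mat 1) *v g) ((cscale \<mu> \<alpha> - mat 1) *v g) t"
  unfolding PiM_mk Pc_def by (simp only: Lam1_pos Lam2_pos)
lemma Lam1_neg: "t < 0 \<Longrightarrow> Lam1 \<alpha> \<mu> g t = G1 \<alpha> ((cscale \<mu> \<alpha> + mat \<i>) *v g) ((cscale \<mu> \<alpha> - mat \<i>) *v g) t"
  by (simp add: Lam1_def G1_def cscale_t1 cscale_t2)
lemma Lam2_neg: "t < 0 \<Longrightarrow> Lam2 \<alpha> \<mu> g t = G2 \<alpha> ((cscale \<mu> \<alpha> + mat \<i>) *v g) ((cscale \<mu> \<alpha> - mat \<i>) *v g) t"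
  by (simp add: Lam2_def G2_def cscale_t1 cscale_t2)
lemma PiM_neg: "t < 0 \<Longrightarrow> PiM \<alpha> \<mu> g t = Pc \<alpha> ((cscale \<mu> \<alpha> + mat \<i>) *v g) ((cscale \<mu> \<alpha> - mat \<i>) *v g) t"
  unfolding PiM_mk Pc_def by (simp only: Lam1_neg Lam2_neg)

lemma BB_pos: "- (cscale \<i> \<alpha> ** cscale \<i> \<alpha>) = csm 1 (\<alpha> ** (\<alpha>::complex^'n^'n))"
  by (simp add: cscale_def mat_csm csm_mult_l csm_mult_r csm_csm csm_1 csm_minus1)
lemma BB_neg: "- (\<alpha> ** \<alpha>) = csm (-1) (\<alpha> ** (\<alpha>::complex^'n^'n))"
  by (simp add: csm_minus1)

lemma add_mv: "((A::complex^'n^'n) + B) *v v = A *v v + B *v v"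
  by (simp add: matrix_vector_mult_add_rdistrib)
lemma diff_mv: "((A::complex^'n^'n) - B) *v v = A *v v - B *v v"
  by (simp add: matrix_vector_mult_diff_rdistrib)

lemma Phi0_pos:
  assumes "cnj \<mu> = - \<mu>"
  shows "Phic (cscale \<i> \<alpha>) ((cscale \<mu> \<alpha> + mat 1) *v g) ((cscale \<mu> \<alpha> - mat 1) *v g) 0 = 0"
proof -
  have u: "G1 (cscale \<i> \<alpha>) ((cscale \<mu> \<alpha> + mat 1) *v g) ((cscale \<mu> \<alpha> - mat 1) *v g) 0 = (- 2 * \<i>) *s (\<alpha> *v g)"
    unfolding G1_def mexp0 matrix_vector_mul_lid diff_mv add_mv cscale_mv mat_mv mv_smult
    by (simp add: vec_eq_iff matrix_vector_mult_def sum_distrib_left algebra_simps)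
  have v: "G2 (cscale \<i> \<alpha>) ((cscale \<mu> \<alpha> + mat 1) *v g) ((cscale \<mu> \<alpha> - mat 1) *v g) 0 = (2 * \<mu>) *s (\<alpha> *v g)"
    unfolding G2_def mexp0 matrix_vector_mul_lid diff_mv add_mv cscale_mv mat_mv mv_smult
    by (simp add: vec_eq_iff matrix_vector_mult_def sum_distrib_left algebra_simps)
  show ?thesis unfolding Phic_def Pc_def
    by (rule Phi0_gen[OF u v]) (simp add: assms)
qed

lemma Phi0_neg:
  assumes "cnj \<mu> = - \<mu>"
  shows "Phic \<alpha> ((cscale \<mu> \<alpha> + mat \<i>) *v g) ((cscale \<mu> \<alpha> - mat \<i>) *v g) 0 = 0"
proof -
  have u: "G1 \<alpha> ((cscale \<mu> \<alpha> + mat \<i>) *v g) ((cscale \<mu> \<alpha> - mat \<i>) *v g) 0 = (- 2 * \<i>) *s (\<alpha> *v g)"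
    unfolding G1_def mexp0 matrix_vector_mul_lid diff_mv add_mv cscale_mv mat_mv mv_smult
    by (simp add: vec_eq_iff matrix_vector_mult_def sum_distrib_left algebra_simps)
  have v: "G2 \<alpha> ((cscale \<mu> \<alpha> + mat \<i>) *v g) ((cscale \<mu> \<alpha> - mat \<i>) *v g) 0 = (2 * \<mu>) *s (\<alpha> *v g)"
    unfolding G2_def mexp0 matrix_vector_mul_lid diff_mv add_mv cscale_mv mat_mv mv_smult
    by (simp add: vec_eq_iff matrix_vector_mult_def sum_distrib_left algebra_simps)
  show ?thesis unfolding Phic_def Pc_def
    by (rule Phi0_gen[OF u v]) (simp add: assms)
qed


definition "Fc B a b s = Pc B a b s ** e22 ** cadj (Pc B a b s)"

lemma Pc_hvd0: "(Pc B a b has_vector_derivative mk (- ((B ** B) *v G2 B a b t)) (- G1 B a b t)) (at t)"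
  unfolding Pc_def[abs_def] by (intro mk_hvd G1_hvd G2_hvd)

lemma Fc_cont: "continuous_on X (Fc B a b)"
proof (rule continuous_at_imp_continuous_on, rule ballI)
  fix s
  have hQ: "((\<lambda>t. cadj (Pc B a b t)) has_vector_derivative cadj (mk (- ((B ** B) *v G2 B a b s)) (- G1 B a b s))) (at s)"
    by (rule bounded_linear.has_vector_derivative[OF bl_cadj Pc_hvd0])
  from prod3_hvd[OF Pc_hvd0 has_vector_derivative_const[of e22] hQ]
  show "isCont (Fc B a b) s" unfolding Fc_def[abs_def]
    by (rule has_vector_derivative_continuous)
qed

lemma outer_Fc: "outer (G2 B a b s) = Fc B a b s"
  unfolding Fc_def Pc_def by (rule outer_mk)

lemma bl_L: "bounded_linear (\<lambda>M::complex^'n^'n. A ** M - M ** cadj A)"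
  by (intro bounded_linear_sub bounded_bilinear.bounded_linear_right[OF bb_mm]
      bounded_bilinear.bounded_linear_left[OF bb_mm])

context
  fixes \<alpha> :: "complex^'n^'n" and \<mu> :: complex and g :: "complex^'n"
begin

abbreviation "Bp \<equiv> cscale \<i> \<alpha>"
abbreviation "ap \<equiv> (cscale \<mu> \<alpha> + mat 1) *v g"
abbreviation "bp \<equiv> (cscale \<mu> \<alpha> - mat 1) *v g"
abbreviation "an \<equiv> (cscale \<mu> \<alpha> + mat \<i>) *v g"
abbreviation "bn \<equiv> (cscale \<mu> \<alpha> - mat \<i>) *v g"

lemma SM_pos_eq: "u > 0 \<Longrightarrow> SM \<alpha> \<mu> g u = integral {0..u} (Fc Bp ap bp)"
  unfolding SM_def by (auto intro!: integral_cong simp: Lam2_pos outer_Fc)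

lemma G2_0: "G2 B a b 0 = a + b"
  by (simp add: G2_def mexp0[simplified])

lemma Lam2_0: "Lam2 \<alpha> \<mu> g 0 = G2 \<alpha> an bn 0"
  using Lam2_pos[of 0 \<alpha> \<mu> g] by (simp add: G2_0 add_mv diff_mv mat_mv)

lemma SM_neg_eq: "u < 0 \<Longrightarrow> SM \<alpha> \<mu> g u = integral {u..0} (Fc \<alpha> an bn)"
  unfolding SM_def
proof (simp, intro integral_cong)
  fix x assume "x \<in> {u..0}"
  thus "outer (Lam2 \<alpha> \<mu> g x) = Fc \<alpha> an bn x"
    by (cases "x = 0") (auto simp: Lam2_neg Lam2_0 outer_Fc)
qed

lemma SM_pos_hvd:
  assumes "t > 0"
  shows "(SM \<alpha> \<mu> g has_vector_derivative Fc Bp ap bp t) (at t)"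
proof -
  have "((\<lambda>u. integral {0..u} (Fc Bp ap bp)) has_vector_derivative Fc Bp ap bp t) (at t within {0..t+1})"
    by (rule integral_has_vector_derivative[OF Fc_cont]) (use assms in auto)
  hence "((\<lambda>u. integral {0..u} (Fc Bp ap bp)) has_vector_derivative Fc Bp ap bp t) (at t within {0<..<t+1})"
    by (rule has_vector_derivative_within_subset) auto
  hence "((\<lambda>u. integral {0..u} (Fc Bp ap bp)) has_vector_derivative Fc Bp ap bp t) (at t)"
    using has_vector_derivative_within_open[of t "{0<..<t+1}"] assms by auto
  thus ?thesis
    by (rule has_vector_derivative_transform_within_open[where S="{0<..}"]) (use assms SM_pos_eq in auto)
qed

lemma SM_neg_hvd:
  assumes "t < 0"
  shows "(SM \<alpha> \<mu> g has_vector_derivative - Fc \<alpha> an bn t) (at t)"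
proof -
  define F where "F = Fc \<alpha> an bn"
  have eq: "SM \<alpha> \<mu> g u = integral {t-1..0} F - integral {t-1..u} F" if "u \<in> {t-1<..<0}" for u
  proof -
    have "integral {t-1..u} F + integral {u..0} F = integral {t-1..0} F"
      using Henstock_Kurzweil_Integration.integral_combine[where a="t-1" and c=u and b=0 and f=F] that integrable_continuous_interval[OF Fc_cont[of "{t-1..0}" \<alpha> an bn]]
      by (auto simp: F_def)
    thus ?thesis using SM_neg_eq[of u] that by (auto simp: F_def algebra_simps)
  qed
  have "((\<lambda>u. integral {t-1..u} F) has_vector_derivative F t) (at t within {t-1..0})"
    by (rule integral_has_vector_derivative) (use assms in \<open>auto simp: F_def Fc_cont\<close>)
  hence "((\<lambda>u. integral {t-1..u} F) has_vector_derivative F t) (at t within {t-1<..<0})"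
    by (rule has_vector_derivative_within_subset) auto
  hence "((\<lambda>u. integral {t-1..u} F) has_vector_derivative F t) (at t)"
    using has_vector_derivative_within_open[of t "{t-1<..<0}"] assms by auto
  hence "((\<lambda>u. integral {t-1..0} F - integral {t-1..u} F) has_vector_derivative 0 - F t) (at t)"
    by (intro has_vector_derivative_diff has_vector_derivative_const)
  hence "(SM \<alpha> \<mu> g has_vector_derivative 0 - F t) (at t)"
    by (rule has_vector_derivative_transform_within_open[where S="{t-1<..<0}"]) (use assms eq in auto)
  thus ?thesis by (simp add: F_def)
qed

end


lemma SM_pos_id:
  fixes \<alpha> :: "complex^'n^'n"
  assumes "t > 0" "cnj \<mu> = - \<mu>"
  shows "(\<alpha> ** \<alpha>) ** SM \<alpha> \<mu> g t - SM \<alpha> \<mu> g t ** cadj (\<alpha> ** \<alpha>) = PiM \<alpha> \<mu> g t ** Jmat ** cadj (PiM \<alpha> \<mu> g t)"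
proof -
  let ?A = "\<alpha> ** \<alpha>"
  let ?F = "Fc (Bp \<alpha>) (ap \<alpha> \<mu> g) (bp \<alpha> \<mu> g)"
  let ?L = "\<lambda>M::complex^'n^'n. ?A ** M - M ** cadj ?A"
  have int: "?F integrable_on {0..t}" by (rule integrable_continuous_interval[OF Fc_cont])
  have "?L (SM \<alpha> \<mu> g t) = ?L (integral {0..t} ?F)" using SM_pos_eq[where \<alpha>=\<alpha> and \<mu>=\<mu> and g=g, OF assms(1)] by simp
  also have "\<dots> = integral {0..t} (?L \<circ> ?F)" by (rule integral_linear[OF int bl_L, symmetric])
  also have "\<dots> = Phic (Bp \<alpha>) (ap \<alpha> \<mu> g) (bp \<alpha> \<mu> g) t - Phic (Bp \<alpha>) (ap \<alpha> \<mu> g) (bp \<alpha> \<mu> g) 0"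
  proof (rule integral_unique)
    have "((\<lambda>s. csm 1 (?L (?F s))) has_integral
          (Phic (Bp \<alpha>) (ap \<alpha> \<mu> g) (bp \<alpha> \<mu> g) t - Phic (Bp \<alpha>) (ap \<alpha> \<mu> g) (bp \<alpha> \<mu> g) 0)) {0..t}"
      by (rule fundamental_theorem_of_calculus)
         (use assms(1) Phic_hvd[OF BB_pos[of \<alpha>] complex_cnj_one] in \<open>auto simp: Fc_def intro: has_vector_derivative_at_within\<close>)
    thus "((?L \<circ> ?F) has_integral
          (Phic (Bp \<alpha>) (ap \<alpha> \<mu> g) (bp \<alpha> \<mu> g) t - Phic (Bp \<alpha>) (ap \<alpha> \<mu> g) (bp \<alpha> \<mu> g) 0)) {0..t}"
      by (simp add: csm_1 o_def)
  qed
  also have "\<dots> = PiM \<alpha> \<mu> g t ** Jmat ** cadj (PiM \<alpha> \<mu> g t)"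
  proof -
    have e: "PiM \<alpha> \<mu> g t = Pc (Bp \<alpha>) (ap \<alpha> \<mu> g) (bp \<alpha> \<mu> g) t"
      by (rule PiM_pos) (use assms(1) in simp)
    show ?thesis by (simp only: Phi0_pos[OF assms(2)] diff_zero, simp only: Phic_def e)
  qed
  finally show ?thesis .
qed

lemma SM_neg_id:
  fixes \<alpha> :: "complex^'n^'n"
  assumes "t < 0" "cnj \<mu> = - \<mu>"
  shows "(\<alpha> ** \<alpha>) ** SM \<alpha> \<mu> g t - SM \<alpha> \<mu> g t ** cadj (\<alpha> ** \<alpha>) = PiM \<alpha> \<mu> g t ** Jmat ** cadj (PiM \<alpha> \<mu> g t)"
proof -
  let ?A = "\<alpha> ** \<alpha>"
  let ?F = "Fc \<alpha> (an \<alpha> \<mu> g) (bn \<alpha> \<mu> g)"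
  let ?Phi = "Phic \<alpha> (an \<alpha> \<mu> g) (bn \<alpha> \<mu> g)"
  let ?L = "\<lambda>M::complex^'n^'n. ?A ** M - M ** cadj ?A"
  have cnjm1: "cnj (-1::complex) = -1" by simp
  have int: "?F integrable_on {t..0}" by (rule integrable_continuous_interval[OF Fc_cont])
  have "?L (SM \<alpha> \<mu> g t) = ?L (integral {t..0} ?F)" using SM_neg_eq[where \<alpha>=\<alpha> and \<mu>=\<mu> and g=g, OF assms(1)] by simp
  also have "\<dots> = integral {t..0} (?L \<circ> ?F)" by (rule integral_linear[OF int bl_L, symmetric])
  also have "\<dots> = - (?Phi 0 - ?Phi t)"
  proof (rule integral_unique)
    have "((\<lambda>s. csm (-1) (?L (?F s))) has_integral (?Phi 0 - ?Phi t)) {t..0}"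
      by (rule fundamental_theorem_of_calculus)
         (use assms(1) Phic_hvd[OF BB_neg[of \<alpha>] cnjm1] in \<open>auto simp: Fc_def intro: has_vector_derivative_at_within\<close>)
    hence "((\<lambda>s. - csm (-1) (?L (?F s))) has_integral - (?Phi 0 - ?Phi t)) {t..0}"
      by (rule has_integral_neg)
    thus "((?L \<circ> ?F) has_integral - (?Phi 0 - ?Phi t)) {t..0}"
      by (simp add: csm_minus1 o_def)
  qed
  also have "\<dots> = PiM \<alpha> \<mu> g t ** Jmat ** cadj (PiM \<alpha> \<mu> g t)"
  proof -
    have e: "PiM \<alpha> \<mu> g t = Pc \<alpha> (an \<alpha> \<mu> g) (bn \<alpha> \<mu> g) t"
      by (rule PiM_neg) (use assms(1) in simp)
    show ?thesis by (simp only: Phi0_neg[OF assms(2)] diff_zero minus_diff_eq, simp only: Phic_def e)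
  qed
  finally show ?thesis .
qed


lemma conj_deriv:
  fixes C D K :: "complex^2^2" and G :: "complex^2^2"
  assumes "C ** D = G ** C"
  shows "((\<lambda>u. (C ** mexp (u *\<^sub>R D) ** K) *v h) has_vector_derivative G *v ((C ** mexp (t *\<^sub>R D) ** K) *v h)) (at t)"
proof -
  have bl: "bounded_linear (\<lambda>E::complex^2^2. (C ** E ** K) *v h)"
    by (intro bounded_linear_compose[OF bounded_bilinear.bounded_linear_left[OF bb_mv]]
        bounded_linear_compose[OF bounded_bilinear.bounded_linear_left[OF bb_mm]]
        bounded_bilinear.bounded_linear_right[OF bb_mm])
  have "((\<lambda>u. (C ** mexp (u *\<^sub>R D) ** K) *v h) has_vector_derivative (C ** (D ** mexp (t *\<^sub>R D)) ** K) *v h) (at t)"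
    by (rule bounded_linear.has_vector_derivative[OF bl mexp_hvd])
  moreover have "(C ** (D ** mexp (t *\<^sub>R D)) ** K) *v h = G *v ((C ** mexp (t *\<^sub>R D) ** K) *v h)"
    by (simp add: matrix_mul_assoc matrix_vector_mul_assoc assms)
  ultimately show ?thesis by simp
qed

lemma TpDp: "s^2 = lam \<Longrightarrow> Tp s ** Dp s = Gm lam 1 ** Tp s"
  by (auto simp: Tp_def Dp_def Gm_def matrix_matrix_mult_def sum_2 vec_eq_iff forall_2 power2_eq_square algebra_simps)
lemma TmDm: "s^2 = lam \<Longrightarrow> Tm s ** Dm s = Gm lam (-1) ** Tm s"
  by (auto simp: Tm_def Dm_def Gm_def matrix_matrix_mult_def sum_2 vec_eq_iff forall_2 power2_eq_square algebra_simps)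

lemma y_pos:
  assumes "t > 0" "s^2 = lam"
  shows "(yinit s h has_vector_derivative Gm lam 1 *v yinit s h t) (at t)"
proof -
  have "((\<lambda>u. (Tp s ** mexp (u *\<^sub>R Dp s) ** matrix_inv (Tp s)) *v h) has_vector_derivative
        Gm lam 1 *v ((Tp s ** mexp (t *\<^sub>R Dp s) ** matrix_inv (Tp s)) *v h)) (at t)"
    by (rule conj_deriv[OF TpDp[OF assms(2)]])
  moreover have "yinit s h t = (Tp s ** mexp (t *\<^sub>R Dp s) ** matrix_inv (Tp s)) *v h"
    using assms(1) by (simp add: yinit_def cscale_t1)
  ultimately have "((\<lambda>u. (Tp s ** mexp (u *\<^sub>R Dp s) ** matrix_inv (Tp s)) *v h) has_vector_derivative
        Gm lam 1 *v yinit s h t) (at t)" by simp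
  thus ?thesis
    by (rule has_vector_derivative_transform_within_open[where S="{0<..}"])
       (use assms(1) in \<open>auto simp: yinit_def cscale_t1\<close>)
qed

lemma y_neg:
  assumes "t < 0" "s^2 = lam"
  shows "(yinit s h has_vector_derivative Gm lam (-1) *v yinit s h t) (at t)"
proof -
  have "((\<lambda>u. (Tm s ** mexp (u *\<^sub>R Dm s) ** matrix_inv (Tm s)) *v h) has_vector_derivative
        Gm lam (-1) *v ((Tm s ** mexp (t *\<^sub>R Dm s) ** matrix_inv (Tm s)) *v h)) (at t)"
    by (rule conj_deriv[OF TmDm[OF assms(2)]])
  moreover have "yinit s h t = (Tm s ** mexp (t *\<^sub>R Dm s) ** matrix_inv (Tm s)) *v h"
    using assms(1) by (simp add: yinit_def cscale_t1)
  ultimately have "((\<lambda>u. (Tm s ** mexp (u *\<^sub>R Dm s) ** matrix_inv (Tm s)) *v h) has_vector_derivative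
        Gm lam (-1) *v yinit s h t) (at t)" by simp
  thus ?thesis
    by (rule has_vector_derivative_transform_within_open[where S="{..<0}"])
       (use assms(1) in \<open>auto simp: yinit_def cscale_t1\<close>)
qed


lemma side:
  fixes P :: "real \<Rightarrow> complex^2^'n" and S :: "real \<Rightarrow> complex^'n^'n" and A :: "complex^'n^'n"
    and y :: "real \<Rightarrow> complex^2" and sv :: "real \<Rightarrow> complex"
  assumes U: "open U" "x \<in> U"
    and hP: "\<And>t. t \<in> U \<Longrightarrow> (P has_vector_derivative (csm \<sigma> (A ** P t ** e21) - P t ** e12)) (at t)"
    and hS: "\<And>t. t \<in> U \<Longrightarrow> (S has_vector_derivative csm \<sigma> (P t ** e22 ** cadj (P t))) (at t)"
    and hdet: "\<And>t. t \<in> U \<Longrightarrow> det (S t) \<noteq> 0"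
    and hid: "\<And>t. t \<in> U \<Longrightarrow> A ** S t - S t ** cadj A = P t ** Jmat ** cadj (P t)"
    and hlam: "det (A - mat lam) \<noteq> 0"
    and sig: "cnj \<sigma> = \<sigma>" "\<sigma> * \<sigma> = 1"
    and hy: "\<And>t. t \<in> U \<Longrightarrow> (y has_vector_derivative (Gm lam \<sigma> *v y t)) (at t)"
    and hsv: "\<And>t. t \<in> U \<Longrightarrow> sv t = \<sigma>"
  defines "T \<equiv> \<lambda>t. matrix_inv (S t)" and "R \<equiv> matrix_inv (A - mat lam)"
  shows "((\<lambda>t. Yf P T R y t $ 1) has_vector_derivative F1f (sv x) P T R y x) (at x)"
    and "((\<lambda>t. F1f (sv t) P T R y t) has_vector_derivative F2f A lam (sv x) P T R y x) (at x)"
    and "- F2f A lam (sv x) P T R y x + (2 * sv x * ((Jmat ** cadj (P x) ** T x ** P x)$1$1 - (Jmat ** cadj (P x) ** T x ** P x)$2$2)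
           + 2 * ((Jmat ** cadj (P x) ** T x ** P x)$1$2)^2) * Yf P T R y x $ 1
         = lam * sv x * Yf P T R y x $ 1"
proof -
  have ST: "S t ** T t = mat 1" "T t ** S t = mat 1" if "t \<in> U" for t
    using matrix_inv_unique[OF hdet[OF that]] by (auto simp: T_def)
  have hT: "(T has_vector_derivative (- csm \<sigma> (T t ** P t ** e22 ** cadj (P t) ** T t))) (at t)" if t: "t \<in> U" for t
  proof -
    have "T differentiable (at t)" unfolding T_def
      by (rule inv_differentiable[OF differentiableI_vector[OF hS[OF t]] U(1) t hdet])
    from inv_hvd[OF hS[OF t] this U(1) t ST(1) ST(2)[OF t]]
    show ?thesis by (simp add: normM)
  qed
  have hAT: "X ** cadj A ** T t = X ** T t ** A - X ** T t ** P t ** Jmat ** cadj (P t) ** T t"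
    if t: "t \<in> U" for t and X :: "complex^'n^2"
  proof -
    have r1: "Y ** S t ** T t = Y" for Y :: "complex^'n^'n"
      by (simp add: matrix_mul_assoc[symmetric] ST[OF t])
    have "T t ** (A ** S t - S t ** cadj A) ** T t = T t ** (P t ** Jmat ** cadj (P t)) ** T t"
      by (simp add: hid[OF t])
    hence "T t ** A - cadj A ** T t = T t ** P t ** Jmat ** cadj (P t) ** T t"
      by (simp add: normM r1 ST(2)[OF t])
    hence "cadj A ** T t = T t ** A - T t ** P t ** Jmat ** cadj (P t) ** T t"
      by (simp add: algebra_simps)
    hence "X ** (cadj A ** T t) = X ** (T t ** A - T t ** P t ** Jmat ** cadj (P t) ** T t)" by simp
    thus ?thesis by (simp add: normM)
  qed
  have R1: "(A - mat lam) ** R = mat 1" "R ** (A - mat lam) = mat 1"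
    using matrix_inv_unique[OF hlam] by (auto simp: R_def)
  have AR: "A ** R = mat 1 + mat lam ** R"
    using R1(1) by (simp add: matrix_sub_rdistrib algebra_simps)
  have RA: "R ** A = mat 1 + mat lam ** R"
    using R1(2) by (simp add: matrix_sub_ldistrib algebra_simps mat_comm)
  have hAR: "X ** A ** R = X + csm lam (X ** R)" for X :: "complex^'n^2"
    by (simp add: matrix_mul_assoc[symmetric] AR matrix_add_ldistrib matrix_mul_assoc mat_comm[symmetric] mat_csm csm_1 csm_mult_r)
  have hRA: "X ** R ** A = X + csm lam (X ** R)" for X :: "complex^'n^2"
    by (simp add: matrix_mul_assoc[symmetric] RA matrix_add_ldistrib matrix_mul_assoc mat_comm[symmetric] mat_csm csm_1 csm_mult_r)
  note L = local_main[OF U hP hT hAT hRA hAR sig hy]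
  have sx: "sv x = \<sigma>" by (rule hsv[OF U(2)])
  show "((\<lambda>t. Yf P T R y t $ 1) has_vector_derivative F1f (sv x) P T R y x) (at x)"
    using L(1) sx by simp
  show "- F2f A lam (sv x) P T R y x + (2 * sv x * ((Jmat ** cadj (P x) ** T x ** P x)$1$1 - (Jmat ** cadj (P x) ** T x ** P x)$2$2)
           + 2 * ((Jmat ** cadj (P x) ** T x ** P x)$1$2)^2) * Yf P T R y x $ 1
         = lam * sv x * Yf P T R y x $ 1"
    using L(3) sx by simp
  show "((\<lambda>t. F1f (sv t) P T R y t) has_vector_derivative F2f A lam (sv x) P T R y x) (at x)"
    using has_vector_derivative_transform_within_open[OF L(2) U] sx hsv by (simp add: sx)
qed


theorem corollary8p2:
  fixes \<alpha> :: "complex^'n^'n" and g :: "complex^'n" and \<mu> :: complex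
    and l :: real and lam s :: complex and h :: "complex^2"
  assumes mu_imag: "cnj \<mu> = - \<mu>"
    and det1: "det (cscale \<mu> \<alpha> + mat 1) \<noteq> 0" "det (cscale \<mu> \<alpha> - mat 1) \<noteq> 0"
    and det2: "det (cscale \<mu> \<alpha> + mat \<i>) \<noteq> 0" "det (cscale \<mu> \<alpha> - mat \<i>) \<noteq> 0"
    and S_inv: "\<And>x. x \<in> {-l<..<l} \<Longrightarrow> x \<noteq> 0 \<Longrightarrow> det (SM \<alpha> \<mu> g x) \<noteq> 0"
    and lam_nz: "lam \<noteq> 0"
    and lam_reg: "det (\<alpha> ** \<alpha> - mat lam) \<noteq> 0"
    and sqrt: "s^2 = lam"
  shows "\<exists>f' f''. \<forall>x \<in> {-l<..<l} - {0}.
           ((\<lambda>t. (wA \<alpha> \<mu> g t lam *v yinit s h t) $ 1) has_vector_derivative f' x) (at x)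
         \<and> (f' has_vector_derivative f'' x) (at x)
         \<and> - f'' x + qbreve \<alpha> \<mu> g x * (wA \<alpha> \<mu> g x lam *v yinit s h x) $ 1
             = lam * of_real (sgn x) * (wA \<alpha> \<mu> g x lam *v yinit s h x) $ 1"
proof -
  define P where "P = PiM \<alpha> \<mu> g"
  define S where "S = SM \<alpha> \<mu> g"
  define A where "A = \<alpha> ** \<alpha>"
  define T where "T = (\<lambda>t. matrix_inv (S t))"
  define R where "R = matrix_inv (A - mat lam)"
  define y where "y = yinit s h"
  define sv where "sv = (\<lambda>t::real. (of_real (sgn t) :: complex))"
  define f' where "f' = (\<lambda>t. F1f (sv t) P T R y t)"
  define f'' where "f'' = (\<lambda>t. F2f A lam (sv t) P T R y t)"
  have Yw: "Yf P T R y t = wA \<alpha> \<mu> g t lam *v yinit s h t" for t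
    by (simp add: Yf_def wA_def P_def T_def R_def y_def S_def A_def)
  have qb: "qbreve \<alpha> \<mu> g x = 2 * sv x * ((Jmat ** cadj (P x) ** T x ** P x)$1$1 - (Jmat ** cadj (P x) ** T x ** P x)$2$2)
           + 2 * ((Jmat ** cadj (P x) ** T x ** P x)$1$2)^2" for x
    by (simp add: qbreve_def XM_def sv_def P_def T_def S_def)
  have main: "((\<lambda>t. Yf P T R y t $ 1) has_vector_derivative f' x) (at x)
      \<and> (f' has_vector_derivative f'' x) (at x)
      \<and> - f'' x + (2 * sv x * ((Jmat ** cadj (P x) ** T x ** P x)$1$1 - (Jmat ** cadj (P x) ** T x ** P x)$2$2)
           + 2 * ((Jmat ** cadj (P x) ** T x ** P x)$1$2)^2) * Yf P T R y x $ 1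
         = lam * sv x * Yf P T R y x $ 1"
    if x: "x \<in> {-l<..<l} - {0}" for x
  proof (cases "x > 0")
    case True
    define U where "U = {0<..<l}"
    have U: "open U" "x \<in> U" using x True by (auto simp: U_def)
    have hP: "(P has_vector_derivative (csm 1 (A ** P t ** e21) - P t ** e12)) (at t)" if t: "t \<in> U" for t
    proof -
      have "(Pc (Bp \<alpha>) (ap \<alpha> \<mu> g) (bp \<alpha> \<mu> g) has_vector_derivative
            (csm 1 (A ** Pc (Bp \<alpha>) (ap \<alpha> \<mu> g) (bp \<alpha> \<mu> g) t ** e21) - Pc (Bp \<alpha>) (ap \<alpha> \<mu> g) (bp \<alpha> \<mu> g) t ** e12)) (at t)"
        unfolding A_def by (rule Pc_hvd[OF BB_pos])
      hence "(P has_vector_derivative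
            (csm 1 (A ** Pc (Bp \<alpha>) (ap \<alpha> \<mu> g) (bp \<alpha> \<mu> g) t ** e21) - Pc (Bp \<alpha>) (ap \<alpha> \<mu> g) (bp \<alpha> \<mu> g) t ** e12)) (at t)"
        by (rule has_vector_derivative_transform_within_open[where S="{0<..}"])
           (use t in \<open>auto simp: U_def P_def PiM_pos\<close>)
      moreover have "P t = Pc (Bp \<alpha>) (ap \<alpha> \<mu> g) (bp \<alpha> \<mu> g) t" using t by (simp add: U_def P_def PiM_pos)
      ultimately show ?thesis by simp
    qed
    have hS: "(S has_vector_derivative csm 1 (P t ** e22 ** cadj (P t))) (at t)" if t: "t \<in> U" for t
    proof -
      have "P t = Pc (Bp \<alpha>) (ap \<alpha> \<mu> g) (bp \<alpha> \<mu> g) t" using t by (simp add: U_def P_def PiM_pos)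
      thus ?thesis using SM_pos_hvd[of t \<alpha> \<mu> g] t by (simp add: U_def S_def Fc_def csm_1)
    qed
    have hdet: "det (S t) \<noteq> 0" if "t \<in> U" for t using S_inv that by (auto simp: U_def S_def)
    have hid: "A ** S t - S t ** cadj A = P t ** Jmat ** cadj (P t)" if "t \<in> U" for t
      using SM_pos_id[OF _ mu_imag, of t \<alpha> g] that by (simp add: U_def A_def S_def P_def)
    have hy: "(y has_vector_derivative (Gm lam 1 *v y t)) (at t)" if "t \<in> U" for t
      using y_pos[OF _ sqrt, of t h] that by (simp add: U_def y_def)
    have hsv: "sv t = 1" if "t \<in> U" for t using that by (simp add: U_def sv_def)
    have c1: "cnj (1::complex) = 1" "(1::complex) * 1 = 1" by simp_all
    note sd = side[where sv=sv and x=x and y=y and P=P and S=S and A=A, OF U hP hS hdet hid lam_reg[folded A_def] c1 hy hsv]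
    show ?thesis using sd unfolding f'_def f''_def T_def R_def by simp
  next
    case False
    hence xn: "x < 0" using x by auto
    define U where "U = {-l<..<0}"
    have U: "open U" "x \<in> U" using x xn by (auto simp: U_def)
    have hP: "(P has_vector_derivative (csm (-1) (A ** P t ** e21) - P t ** e12)) (at t)" if t: "t \<in> U" for t
    proof -
      have "(Pc \<alpha> (an \<alpha> \<mu> g) (bn \<alpha> \<mu> g) has_vector_derivative
            (csm (-1) (A ** Pc \<alpha> (an \<alpha> \<mu> g) (bn \<alpha> \<mu> g) t ** e21) - Pc \<alpha> (an \<alpha> \<mu> g) (bn \<alpha> \<mu> g) t ** e12)) (at t)"
        unfolding A_def by (rule Pc_hvd[OF BB_neg])
      hence "(P has_vector_derivative
            (csm (-1) (A ** Pc \<alpha> (an \<alpha> \<mu> g) (bn \<alpha> \<mu> g) t ** e21) - Pc \<alpha> (an \<alpha> \<mu> g) (bn \<alpha> \<mu> g) t ** e12)) (at t)"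
        by (rule has_vector_derivative_transform_within_open[where S="{..<0}"])
           (use t in \<open>auto simp: U_def P_def PiM_neg\<close>)
      moreover have "P t = Pc \<alpha> (an \<alpha> \<mu> g) (bn \<alpha> \<mu> g) t" using t by (simp add: U_def P_def PiM_neg)
      ultimately show ?thesis by simp
    qed
    have hS: "(S has_vector_derivative csm (-1) (P t ** e22 ** cadj (P t))) (at t)" if t: "t \<in> U" for t
    proof -
      have "P t = Pc \<alpha> (an \<alpha> \<mu> g) (bn \<alpha> \<mu> g) t" using t by (simp add: U_def P_def PiM_neg)
      thus ?thesis using SM_neg_hvd[of t \<alpha> \<mu> g] t by (simp add: U_def S_def Fc_def csm_minus1)
    qed
    have hdet: "det (S t) \<noteq> 0" if "t \<in> U" for t using S_inv that by (auto simp: U_def S_def)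
    have hid: "A ** S t - S t ** cadj A = P t ** Jmat ** cadj (P t)" if "t \<in> U" for t
      using SM_neg_id[OF _ mu_imag, of t \<alpha> g] that by (simp add: U_def A_def S_def P_def)
    have hy: "(y has_vector_derivative (Gm lam (-1) *v y t)) (at t)" if "t \<in> U" for t
      using y_neg[OF _ sqrt, of t h] that by (simp add: U_def y_def)
    have hsv: "sv t = -1" if "t \<in> U" for t using that by (simp add: U_def sv_def)
    have c1: "cnj (-1::complex) = -1" "(-1::complex) * -1 = 1" by simp_all
    note sd = side[where sv=sv and x=x and y=y and P=P and S=S and A=A, OF U hP hS hdet hid lam_reg[folded A_def] c1 hy hsv]
    show ?thesis using sd unfolding f'_def f''_def T_def R_def by simp
  qed
  show ?thesis
  proof (intro exI ballI)
    fix x assume x: "x \<in> {-l<..<l} - {0}"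
    show "((\<lambda>t. (wA \<alpha> \<mu> g t lam *v yinit s h t) $ 1) has_vector_derivative f' x) (at x)
         \<and> (f' has_vector_derivative f'' x) (at x)
         \<and> - f'' x + qbreve \<alpha> \<mu> g x * (wA \<alpha> \<mu> g x lam *v yinit s h x) $ 1
             = lam * of_real (sgn x) * (wA \<alpha> \<mu> g x lam *v yinit s h x) $ 1"
      using main[OF x] unfolding Yw qb by (simp add: sv_def)
  qed
qed


end
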